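(* Assume (H1) and that $\alpha$ is symmetric, and let $Q$ be a function on the interior $\mathcal{D}^\circ$ of $\mathcal{D}$ with $\nabla Q=q$. Let $F(s)=|\nabla Q(s)|^2-\Delta Q(s)$. Then (i) there is a constant $C\in\mathbb{R}$ with $F(s)\ge C$ for all $s\in\mathcal{D}^\circ$; (ii) $\inf\{F(s): s\in\mathcal{D}^\circ,\ |s|\ge R\}\to+\infty$ as $R\to\infty$.
   Context: $\gamma>0$, $\beta_i,\delta_i\in\mathbb{R}$, $\alpha_{ij}\in\mathbb{R}$; (H1): $\sum_{i,j}\alpha_{ij}z_iz_j>0$ for all $z\in(\mathbb{R}_+)^3\setminus\{0\}$. For $n\ge0$, $x\in[0,1]$: $U(n,x)=\beta_1-\delta_1-n(\alpha_{11}x^2+2\alpha_{21}x(1-x)+\alpha_{31}(1-x)^2)$, $V(n,x)=\beta_2-\delta_2-n(\alpha_{12}x^2+2\alpha_{22}x(1-x)+\alpha_{32}(1-x)^2)$, $W(n,x)=\beta_3-\delta_3-n(\alpha_{13}x^2+2\alpha_{23}x(1-x)+\alpha_{33}(1-x)^2)$. Generator on $(n,x)\in(0,\infty)\times(0,1)$: $\mathcal{L}f=b_N\partial_nf+b_X\partial_xf+\gamma n\,\partial^2_{nn}f+\frac{\gamma x(1-x)}{2n}\partial^2_{xx}f$, with $b_N(n,x)=n[x^2U+2x(1-x)V+(1-x)^2W]$ and $b_X(n,x)=(1-x)x^2(U-V)+x(1-x)^2(V-W)$. $u=\tan(\pi/\sqrt2)$, $\mathcal{D}=\{(s_1,s_2):s_2\ge0,\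 s_2\ge us_1\}$. $\psi(n,x)=\sqrt{2n/\gamma}\,(\cos\frac{\arccos(2x-1)}{\sqrt2},\sin\frac{\arccos(2x-1)}{\sqrt2})$, a bijection $(0,\infty)\times[0,1]\to\mathcal{D}\setminus\{(0,0)\}$. For $s\in\mathcal{D}^\circ$, $q(s):=-(\mathcal{L}\psi)(\psi^{-1}(s))$ (componentwise); when $\alpha$ is symmetric $q$ is a gradient field on $\mathcal{D}^\circ$ (e.g. in the neutral case $Q(s)=\ln|s|+\frac12\ln\sin(\sqrt2\theta(s))-(\beta-\delta-\frac{\alpha\gamma}{4}|s|^2)\frac{|s|^2}{4}$, $\theta(s)$ the polar angle). *)

theory Defs
  imports "HOL-Analysis.Analysis"
begin

text \<open>Ufun _ _ _ 1 = U, Ufun _ _ _ 2 = V, Ufun _ _ _ 3 = W.\<close>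
definition Ufun :: "(nat \<Rightarrow> real) \<Rightarrow> (nat \<Rightarrow> real) \<Rightarrow> (nat \<Rightarrow> nat \<Rightarrow> real) \<Rightarrow> nat \<Rightarrow> real \<Rightarrow> real \<Rightarrow> real" where
  "Ufun \<beta> \<delta> \<alpha> k n x =
     \<beta> k - \<delta> k - n * (\<alpha> 1 k * x\<^sup>2 + 2 * \<alpha> 2 k * x * (1 - x) + \<alpha> 3 k * (1 - x)\<^sup>2)"

definition bN :: "(nat \<Rightarrow> real) \<Rightarrow> (nat \<Rightarrow> real) \<Rightarrow> (nat \<Rightarrow> nat \<Rightarrow> real) \<Rightarrow> real \<Rightarrow> real \<Rightarrow> real" where
  "bN \<beta> \<delta> \<alpha> n x = n * (x\<^sup>2 * Ufun \<beta> \<delta> \<alpha> 1 n x + 2 * x * (1 - x) * Ufun \<beta> \<delta> \<alpha> 2 n x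
                          + (1 - x)\<^sup>2 * Ufun \<beta> \<delta> \<alpha> 3 n x)"

definition bX :: "(nat \<Rightarrow> real) \<Rightarrow> (nat \<Rightarrow> real) \<Rightarrow> (nat \<Rightarrow> nat \<Rightarrow> real) \<Rightarrow> real \<Rightarrow> real \<Rightarrow> real" where
  "bX \<beta> \<delta> \<alpha> n x = (1 - x) * x\<^sup>2 * (Ufun \<beta> \<delta> \<alpha> 1 n x - Ufun \<beta> \<delta> \<alpha> 2 n x)
                     + x * (1 - x)\<^sup>2 * (Ufun \<beta> \<delta> \<alpha> 2 n x - Ufun \<beta> \<delta> \<alpha> 3 n x)"

definition gen :: "real \<Rightarrow> (nat \<Rightarrow> real) \<Rightarrow> (nat \<Rightarrow> real) \<Rightarrow> (nat \<Rightarrow> nat \<Rightarrow> real)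
                    \<Rightarrow> (real \<Rightarrow> real \<Rightarrow> real) \<Rightarrow> real \<Rightarrow> real \<Rightarrow> real" where
  "gen \<gamma> \<beta> \<delta> \<alpha> f n x =
     bN \<beta> \<delta> \<alpha> n x * deriv (\<lambda>m. f m x) n
   + bX \<beta> \<delta> \<alpha> n x * deriv (\<lambda>y. f n y) x
   + \<gamma> * n * deriv (\<lambda>m. deriv (\<lambda>m'. f m' x) m) n
   + \<gamma> * x * (1 - x) / (2 * n) * deriv (\<lambda>y. deriv (\<lambda>y'. f n y') y) x"

definition uconst :: real where "uconst = tan (pi / sqrt 2)"

definition Dom :: "(real \<times> real) set" where
  "Dom = {(s1, s2). s2 \<ge> 0 \<and> s2 \<ge> uconst * s1}"

definition psi1 :: "real \<Rightarrow> real \<Rightarrow> real \<Rightarrow> real" where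
  "psi1 \<gamma> n x = sqrt (2 * n / \<gamma>) * cos (arccos (2 * x - 1) / sqrt 2)"

definition psi2 :: "real \<Rightarrow> real \<Rightarrow> real \<Rightarrow> real" where
  "psi2 \<gamma> n x = sqrt (2 * n / \<gamma>) * sin (arccos (2 * x - 1) / sqrt 2)"

definition psi :: "real \<Rightarrow> real \<times> real \<Rightarrow> real \<times> real" where
  "psi \<gamma> = (\<lambda>(n, x). (psi1 \<gamma> n x, psi2 \<gamma> n x))"

text \<open>q(s) = -(L psi)(psi^{-1}(s)), psi as a bijection (0,inf) x [0,1] -> D \ {0}.\<close>
definition qfield :: "real \<Rightarrow> (nat \<Rightarrow> real) \<Rightarrow> (nat \<Rightarrow> real) \<Rightarrow> (nat \<Rightarrow> nat \<Rightarrow> real)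
                       \<Rightarrow> real \<times> real \<Rightarrow> real \<times> real" where
  "qfield \<gamma> \<beta> \<delta> \<alpha> s =
     (let (n, x) = inv_into ({0<..} \<times> {0..1}) (psi \<gamma>) s
      in (- gen \<gamma> \<beta> \<delta> \<alpha> (psi1 \<gamma>) n x, - gen \<gamma> \<beta> \<delta> \<alpha> (psi2 \<gamma>) n x))"

definition grad2 :: "(real \<times> real \<Rightarrow> real) \<Rightarrow> real \<times> real \<Rightarrow> real \<times> real" where
  "grad2 Q = (\<lambda>(s1, s2). (deriv (\<lambda>u. Q (u, s2)) s1, deriv (\<lambda>u. Q (s1, u)) s2))"

definition lap2 :: "(real \<times> real \<Rightarrow> real) \<Rightarrow> real \<times> real \<Rightarrow> real" where
  "lap2 Q = (\<lambda>(s1, s2). deriv (\<lambda>t. deriv (\<lambda>u. Q (u, s2)) t) s1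
                      + deriv (\<lambda>t. deriv (\<lambda>u. Q (s1, u)) t) s2)"

definition Ffun :: "(real \<times> real \<Rightarrow> real) \<Rightarrow> real \<times> real \<Rightarrow> real" where
  "Ffun Q s = (norm (grad2 Q s))\<^sup>2 - lap2 Q s"

end

theory Submission
  imports Defs "HOL-Real_Asymp.Real_Asymp"
begin


lemma DERIV_eq: "(f has_real_derivative a) F \<Longrightarrow> a = b \<Longrightarrow> (f has_real_derivative b) F" by simp

lemma arccos_line_deriv:
  fixes a b :: real
  assumes b: "b \<noteq> 0" 
  shows "((\<lambda>t. arccos (t / sqrt (t\<^sup>2 + b\<^sup>2))) has_real_derivative (- \<bar>b\<bar> / (a\<^sup>2 + b\<^sup>2))) (at a)"
proof -
  define r where "r = sqrt (a\<^sup>2 + b\<^sup>2)"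
  have pos: "a\<^sup>2 + b\<^sup>2 > 0" using b by (simp add: add_nonneg_pos)
  have r: "r > 0" using pos r_def by simp
  have r2: "r\<^sup>2 = a\<^sup>2 + b\<^sup>2" using pos r_def by simp
  have lt: "\<bar>a / r\<bar> < 1"
  proof -
    have "a\<^sup>2 < r\<^sup>2" using r2 b by simp
    hence "\<bar>a\<bar> < \<bar>r\<bar>" using abs_less_iff power2_less_imp_less  by (metis abs_ge_zero power2_abs)
    thus ?thesis using r by (simp add: divide_less_eq)
  qed
  have h1: "-1 < a/r" "a/r < 1" using lt unfolding abs_less_iff by auto
  have dy: "((\<lambda>t. t / sqrt (t\<^sup>2 + b\<^sup>2)) has_real_derivative (b\<^sup>2 / r^3)) (at a)"
  proof -
    have "((\<lambda>t. t\<^sup>2 + b\<^sup>2) has_real_derivative 2*a) (at a)"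
      by (auto intro!: derivative_eq_intros)
    from DERIV_chain2[OF DERIV_real_sqrt[OF pos] this]
    have ds: "((\<lambda>t. sqrt (t\<^sup>2 + b\<^sup>2)) has_real_derivative (a / r)) (at a)"
      apply (rule DERIV_eq) using r unfolding r_def by (simp add: field_simps)
    have "((\<lambda>t. t / sqrt (t\<^sup>2 + b\<^sup>2)) has_real_derivative ((1 * sqrt (a\<^sup>2 + b\<^sup>2) - a * (a/r)) / (sqrt (a\<^sup>2 + b\<^sup>2) * sqrt (a\<^sup>2 + b\<^sup>2)))) (at a)"
      by (rule DERIV_divide[OF DERIV_ident ds]) (use b in simp)
    thus ?thesis unfolding r_def[symmetric] apply (rule DERIV_eq) using r r2 by (simp add: field_simps power2_eq_square power3_eq_cube)
  qed
  have sq1: "sqrt (1 - (a/r)\<^sup>2) = \<bar>b\<bar> / r"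
  proof -
    have e: "(a/r)\<^sup>2 + (b/r)\<^sup>2 = 1" using r r2 b by (simp add: power_divide add_divide_distrib[symmetric])
    have "1 - (a/r)\<^sup>2 = (\<bar>b\<bar>/r)\<^sup>2" using e by (simp add: power_divide)
    thus ?thesis using r by simp
  qed
  from DERIV_chain2[OF DERIV_arccos[OF h1[unfolded r_def]] dy] show ?thesis
    unfolding r_def[symmetric] apply (rule DERIV_eq)
  proof -
    have bb: "b\<^sup>2 = \<bar>b\<bar>\<^sup>2" by simp
    have "inverse (- sqrt (1 - (a / r)\<^sup>2)) * (b\<^sup>2 / r ^ 3) = - (r / \<bar>b\<bar>) * (\<bar>b\<bar>\<^sup>2 / r^3)"
      unfolding sq1 bb using b by (simp add: field_simps)
    also have "\<dots> = - \<bar>b\<bar> / r\<^sup>2" using r b by (simp add: field_simps power2_eq_square power3_eq_cube)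
    finally show "inverse (- sqrt (1 - (a / r)\<^sup>2)) * (b\<^sup>2 / r ^ 3) = - \<bar>b\<bar> / (a\<^sup>2 + b\<^sup>2)" using r2 by simp
  qed
qed

lemma arccos_col_deriv:
  fixes a b :: real
  assumes b: "b > 0" 
  shows "((\<lambda>t. arccos (a / sqrt (a\<^sup>2 + t\<^sup>2))) has_real_derivative (a / (a\<^sup>2 + b\<^sup>2))) (at b)"
proof -
  define r where "r = sqrt (a\<^sup>2 + b\<^sup>2)"
  have pos: "a\<^sup>2 + b\<^sup>2 > 0" using b by (simp add: add_nonneg_pos)
  have r: "r > 0" using pos r_def by simp
  have r2: "r\<^sup>2 = a\<^sup>2 + b\<^sup>2" using pos r_def by simp
  have lt: "\<bar>a / r\<bar> < 1"
  proof -
    have "a\<^sup>2 < r\<^sup>2" using r2 b by simp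
    hence "\<bar>a\<bar> < \<bar>r\<bar>" using power2_less_imp_less  by (metis abs_ge_zero power2_abs)
    thus ?thesis using r by (simp add: divide_less_eq)
  qed
  have h1: "-1 < a/r" "a/r < 1" using lt unfolding abs_less_iff by auto
  have dy: "((\<lambda>t. a / sqrt (a\<^sup>2 + t\<^sup>2)) has_real_derivative (- a * b / r^3)) (at b)"
  proof -
    have "((\<lambda>t. a\<^sup>2 + t\<^sup>2) has_real_derivative 2*b) (at b)"
      by (auto intro!: derivative_eq_intros)
    from DERIV_chain2[OF DERIV_real_sqrt[OF pos] this]
    have ds: "((\<lambda>t. sqrt (a\<^sup>2 + t\<^sup>2)) has_real_derivative (b / r)) (at b)"
      apply (rule DERIV_eq) using r unfolding r_def by (simp add: field_simps)
    have "((\<lambda>t. a / sqrt (a\<^sup>2 + t\<^sup>2)) has_real_derivative ((0 * sqrt (a\<^sup>2 + b\<^sup>2) - a * (b/r)) / (sqrt (a\<^sup>2 + b\<^sup>2) * sqrt (a\<^sup>2 + b\<^sup>2)))) (at b)"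
      by (rule DERIV_divide[OF DERIV_const ds]) (use b in simp)
    thus ?thesis unfolding r_def[symmetric] apply (rule DERIV_eq) using r r2 by (simp add: field_simps power2_eq_square power3_eq_cube)
  qed
  have sq1: "sqrt (1 - (a/r)\<^sup>2) = b / r"
  proof -
    have e: "(a/r)\<^sup>2 + (b/r)\<^sup>2 = 1" using r r2 b by (simp add: power_divide add_divide_distrib[symmetric])
    have "1 - (a/r)\<^sup>2 = (b/r)\<^sup>2" using e by (simp add: power_divide)
    thus ?thesis using r b by simp
  qed
  from DERIV_chain2[OF DERIV_arccos[OF h1[unfolded r_def]] dy] show ?thesis
    unfolding r_def[symmetric] apply (rule DERIV_eq)
  proof -
    have "inverse (- sqrt (1 - (a / r)\<^sup>2)) * (- a * b / r ^ 3) = (r / b) * (a * b / r^3)"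
      unfolding sq1 using b by (simp add: field_simps)
    also have "\<dots> = a / r\<^sup>2" using r b by (simp add: field_simps power2_eq_square power3_eq_cube)
    finally show "inverse (- sqrt (1 - (a / r)\<^sup>2)) * (- a * b / r ^ 3) = a / (a\<^sup>2 + b\<^sup>2)" using r2 by simp
  qed
qed

lemma sqrt_line_deriv:
  fixes a b :: real assumes "b \<noteq> 0"
  shows "((\<lambda>t. sqrt (t\<^sup>2 + b\<^sup>2)) has_real_derivative a / sqrt (a\<^sup>2 + b\<^sup>2)) (at a)"
proof -
  have pos: "a\<^sup>2 + b\<^sup>2 > 0" using assms by (simp add: add_nonneg_pos)
  have "((\<lambda>t. t\<^sup>2 + b\<^sup>2) has_real_derivative 2*a) (at a)"
    by (auto intro!: derivative_eq_intros)
  from DERIV_chain2[OF DERIV_real_sqrt[OF pos] this] show ?thesis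
    apply (rule DERIV_eq) using pos by (simp add: field_simps)
qed

lemma sqrt_col_deriv:
  fixes a b :: real assumes "b \<noteq> 0"
  shows "((\<lambda>t. sqrt (a\<^sup>2 + t\<^sup>2)) has_real_derivative b / sqrt (a\<^sup>2 + b\<^sup>2)) (at b)"
proof -
  have pos: "a\<^sup>2 + b\<^sup>2 > 0" using assms by (simp add: sum_power2_gt_zero_iff)
  have "((\<lambda>t. a\<^sup>2 + t\<^sup>2) has_real_derivative 2*b) (at b)"
    by (auto intro!: derivative_eq_intros)
  from DERIV_chain2[OF DERIV_real_sqrt[OF pos] this] show ?thesis
    apply (rule DERIV_eq) using pos by (simp add: field_simps)
qed

lemma polar_div:
  fixes P T :: "real \<times> real \<Rightarrow> real"
  assumes s2: "0 < s2" and r: "r = sqrt (s1\<^sup>2 + s2\<^sup>2)" and th: "th = arccos (s1 / r)"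
    and dP: "(P has_derivative (\<lambda>h. Pr * fst h + Pt * snd h)) (at (r, th))"
    and dT: "(T has_derivative (\<lambda>h. Tr * fst h + Tt * snd h)) (at (r, th))"
  shows "\<exists>D1 D2.
    ((\<lambda>t. P (sqrt (t\<^sup>2 + s2\<^sup>2), arccos (t / sqrt (t\<^sup>2 + s2\<^sup>2))) * (t / sqrt (t\<^sup>2 + s2\<^sup>2))
        - T (sqrt (t\<^sup>2 + s2\<^sup>2), arccos (t / sqrt (t\<^sup>2 + s2\<^sup>2))) * (s2 / sqrt (t\<^sup>2 + s2\<^sup>2)))
      has_real_derivative D1) (at s1)
  \<and> ((\<lambda>t. P (sqrt (s1\<^sup>2 + t\<^sup>2), arccos (s1 / sqrt (s1\<^sup>2 + t\<^sup>2))) * (t / sqrt (s1\<^sup>2 + t\<^sup>2))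
        + T (sqrt (s1\<^sup>2 + t\<^sup>2), arccos (s1 / sqrt (s1\<^sup>2 + t\<^sup>2))) * (s1 / sqrt (s1\<^sup>2 + t\<^sup>2)))
      has_real_derivative D2) (at s2)
  \<and> D1 + D2 = Pr + P (r, th) / r + Tt / r"
proof -
  have pos: "s1\<^sup>2 + s2\<^sup>2 > 0" using s2 by (simp add: add_nonneg_pos)
  have rp: "r > 0" using pos r by simp
  have r2: "r\<^sup>2 = s1\<^sup>2 + s2\<^sup>2" using pos r by simp
  have s2n: "s2 \<noteq> 0" using s2 by simp
  have dr1: "((\<lambda>t. sqrt (t\<^sup>2 + s2\<^sup>2)) has_real_derivative s1 / r) (at s1)"
    using sqrt_line_deriv[OF s2n, of s1] r by simp
  have dth1: "((\<lambda>t. arccos (t / sqrt (t\<^sup>2 + s2\<^sup>2))) has_real_derivative - s2 / r\<^sup>2) (at s1)"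
    using arccos_line_deriv[OF s2n, of s1] r2 s2 by simp
  have path1: "((\<lambda>t. (sqrt (t\<^sup>2 + s2\<^sup>2), arccos (t / sqrt (t\<^sup>2 + s2\<^sup>2)))) has_derivative
      (\<lambda>h. (s1 / r * h, - s2 / r\<^sup>2 * h))) (at s1)"
    using has_derivative_Pair[OF dr1[unfolded has_field_derivative_def] dth1[unfolded has_field_derivative_def]] by simp
  have at1: "(sqrt (s1\<^sup>2 + s2\<^sup>2), arccos (s1 / sqrt (s1\<^sup>2 + s2\<^sup>2))) = (r, th)" using r th by simp
  have dP1: "((\<lambda>t. P (sqrt (t\<^sup>2 + s2\<^sup>2), arccos (t / sqrt (t\<^sup>2 + s2\<^sup>2)))) has_real_derivative
        (Pr * (s1/r) + Pt * (- s2 / r\<^sup>2))) (at s1)"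
    unfolding has_field_derivative_def
    apply (rule has_derivative_eq_rhs[where f'="(\<lambda>h. Pr * (s1 / r * h) + Pt * (- s2 / r\<^sup>2 * h))"])
    using has_derivative_compose[OF path1 dP[folded at1]] apply simp
    by (auto simp: algebra_simps fun_eq_iff)
  have dT1: "((\<lambda>t. T (sqrt (t\<^sup>2 + s2\<^sup>2), arccos (t / sqrt (t\<^sup>2 + s2\<^sup>2)))) has_real_derivative
        (Tr * (s1/r) + Tt * (- s2 / r\<^sup>2))) (at s1)"
    unfolding has_field_derivative_def
    apply (rule has_derivative_eq_rhs[where f'="(\<lambda>h. Tr * (s1 / r * h) + Tt * (- s2 / r\<^sup>2 * h))"])
    using has_derivative_compose[OF path1 dT[folded at1]] apply simp
    by (auto simp: algebra_simps fun_eq_iff)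
  have dq1: "((\<lambda>t. t / sqrt (t\<^sup>2 + s2\<^sup>2)) has_real_derivative s2\<^sup>2 / r^3) (at s1)"
  proof -
    have "((\<lambda>t. t / sqrt (t\<^sup>2 + s2\<^sup>2)) has_real_derivative
       ((1 * sqrt (s1\<^sup>2 + s2\<^sup>2) - s1 * (s1/r)) / (sqrt (s1\<^sup>2 + s2\<^sup>2) * sqrt (s1\<^sup>2 + s2\<^sup>2)))) (at s1)"
      by (rule DERIV_divide[OF DERIV_ident dr1]) (use s2 in simp)
    thus ?thesis unfolding r[symmetric] apply (rule DERIV_eq) using rp r2 by (simp add: field_simps power2_eq_square power3_eq_cube)
  qed
  have dq2: "((\<lambda>t. s2 / sqrt (t\<^sup>2 + s2\<^sup>2)) has_real_derivative - s2 * s1 / r^3) (at s1)"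
  proof -
    have "((\<lambda>t. s2 / sqrt (t\<^sup>2 + s2\<^sup>2)) has_real_derivative
       ((0 * sqrt (s1\<^sup>2 + s2\<^sup>2) - s2 * (s1/r)) / (sqrt (s1\<^sup>2 + s2\<^sup>2) * sqrt (s1\<^sup>2 + s2\<^sup>2)))) (at s1)"
      by (rule DERIV_divide[OF DERIV_const dr1]) (use s2 in simp)
    thus ?thesis unfolding r[symmetric] apply (rule DERIV_eq) using rp r2 by (simp add: field_simps power2_eq_square power3_eq_cube)
  qed
  have D1: "((\<lambda>t. P (sqrt (t\<^sup>2 + s2\<^sup>2), arccos (t / sqrt (t\<^sup>2 + s2\<^sup>2))) * (t / sqrt (t\<^sup>2 + s2\<^sup>2))
        - T (sqrt (t\<^sup>2 + s2\<^sup>2), arccos (t / sqrt (t\<^sup>2 + s2\<^sup>2))) * (s2 / sqrt (t\<^sup>2 + s2\<^sup>2)))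
      has_real_derivative
       ((Pr * (s1/r) + Pt * (- s2 / r\<^sup>2)) * (s1 / r) + P (r, th) * (s2\<^sup>2 / r^3)
       - ((Tr * (s1/r) + Tt * (- s2 / r\<^sup>2)) * (s2 / r) + T (r, th) * (- s2 * s1 / r^3)))) (at s1)"
    using DERIV_diff[OF DERIV_mult[OF dP1 dq1] DERIV_mult[OF dT1 dq2]] unfolding at1 r[symmetric]
    by (rule DERIV_eq) (simp add: algebra_simps th)
  have dr2: "((\<lambda>t. sqrt (s1\<^sup>2 + t\<^sup>2)) has_real_derivative s2 / r) (at s2)"
    using sqrt_col_deriv[OF s2n, of s1] r by simp
  have dth2: "((\<lambda>t. arccos (s1 / sqrt (s1\<^sup>2 + t\<^sup>2))) has_real_derivative s1 / r\<^sup>2) (at s2)"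
    using arccos_col_deriv[OF s2, of s1] r2 by simp
  have path2: "((\<lambda>t. (sqrt (s1\<^sup>2 + t\<^sup>2), arccos (s1 / sqrt (s1\<^sup>2 + t\<^sup>2)))) has_derivative
      (\<lambda>h. (s2 / r * h, s1 / r\<^sup>2 * h))) (at s2)"
    using has_derivative_Pair[OF dr2[unfolded has_field_derivative_def] dth2[unfolded has_field_derivative_def]] by simp
  have dP2: "((\<lambda>t. P (sqrt (s1\<^sup>2 + t\<^sup>2), arccos (s1 / sqrt (s1\<^sup>2 + t\<^sup>2)))) has_real_derivative
        (Pr * (s2/r) + Pt * (s1 / r\<^sup>2))) (at s2)"
    unfolding has_field_derivative_def
    apply (rule has_derivative_eq_rhs[where f'="(\<lambda>h. Pr * (s2 / r * h) + Pt * (s1 / r\<^sup>2 * h))"])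
    using has_derivative_compose[OF path2 dP[folded at1]] apply simp
    by (auto simp: algebra_simps fun_eq_iff)
  have dT2: "((\<lambda>t. T (sqrt (s1\<^sup>2 + t\<^sup>2), arccos (s1 / sqrt (s1\<^sup>2 + t\<^sup>2)))) has_real_derivative
        (Tr * (s2/r) + Tt * (s1 / r\<^sup>2))) (at s2)"
    unfolding has_field_derivative_def
    apply (rule has_derivative_eq_rhs[where f'="(\<lambda>h. Tr * (s2 / r * h) + Tt * (s1 / r\<^sup>2 * h))"])
    using has_derivative_compose[OF path2 dT[folded at1]] apply simp
    by (auto simp: algebra_simps fun_eq_iff)
  have dq3: "((\<lambda>t. t / sqrt (s1\<^sup>2 + t\<^sup>2)) has_real_derivative s1\<^sup>2 / r^3) (at s2)"
  proof -
    have "((\<lambda>t. t / sqrt (s1\<^sup>2 + t\<^sup>2)) has_real_derivative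
       ((1 * sqrt (s1\<^sup>2 + s2\<^sup>2) - s2 * (s2/r)) / (sqrt (s1\<^sup>2 + s2\<^sup>2) * sqrt (s1\<^sup>2 + s2\<^sup>2)))) (at s2)"
      by (rule DERIV_divide[OF DERIV_ident dr2]) (use s2 in simp)
    thus ?thesis unfolding r[symmetric] apply (rule DERIV_eq) using rp r2 by (simp add: field_simps power2_eq_square power3_eq_cube)
  qed
  have dq4: "((\<lambda>t. s1 / sqrt (s1\<^sup>2 + t\<^sup>2)) has_real_derivative - s1 * s2 / r^3) (at s2)"
  proof -
    have "((\<lambda>t. s1 / sqrt (s1\<^sup>2 + t\<^sup>2)) has_real_derivative
       ((0 * sqrt (s1\<^sup>2 + s2\<^sup>2) - s1 * (s2/r)) / (sqrt (s1\<^sup>2 + s2\<^sup>2) * sqrt (s1\<^sup>2 + s2\<^sup>2)))) (at s2)"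
      by (rule DERIV_divide[OF DERIV_const dr2]) (use s2 in simp)
    thus ?thesis unfolding r[symmetric] apply (rule DERIV_eq) using rp r2 by (simp add: field_simps power2_eq_square power3_eq_cube)
  qed
  have D2: "((\<lambda>t. P (sqrt (s1\<^sup>2 + t\<^sup>2), arccos (s1 / sqrt (s1\<^sup>2 + t\<^sup>2))) * (t / sqrt (s1\<^sup>2 + t\<^sup>2))
        + T (sqrt (s1\<^sup>2 + t\<^sup>2), arccos (s1 / sqrt (s1\<^sup>2 + t\<^sup>2))) * (s1 / sqrt (s1\<^sup>2 + t\<^sup>2)))
      has_real_derivative
       ((Pr * (s2/r) + Pt * (s1 / r\<^sup>2)) * (s2 / r) + P (r, th) * (s1\<^sup>2 / r^3)
       + ((Tr * (s2/r) + Tt * (s1 / r\<^sup>2)) * (s1 / r) + T (r, th) * (- s1 * s2 / r^3)))) (at s2)"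
    using DERIV_add[OF DERIV_mult[OF dP2 dq3] DERIV_mult[OF dT2 dq4]] unfolding at1 r[symmetric]
    by (rule DERIV_eq) (simp add: algebra_simps th)
  have sum: "((Pr * (s1/r) + Pt * (- s2 / r\<^sup>2)) * (s1 / r) + P (r, th) * (s2\<^sup>2 / r^3)
       - ((Tr * (s1/r) + Tt * (- s2 / r\<^sup>2)) * (s2 / r) + T (r, th) * (- s2 * s1 / r^3)))
     + ((Pr * (s2/r) + Pt * (s1 / r\<^sup>2)) * (s2 / r) + P (r, th) * (s1\<^sup>2 / r^3)
       + ((Tr * (s2/r) + Tt * (s1 / r\<^sup>2)) * (s1 / r) + T (r, th) * (- s1 * s2 / r^3)))
     = Pr * ((s1\<^sup>2 + s2\<^sup>2) / r\<^sup>2) + P (r, th) * ((s1\<^sup>2 + s2\<^sup>2) / r^3) + Tt * ((s1\<^sup>2 + s2\<^sup>2) / r^3)"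
    using rp by (simp add: field_simps power2_eq_square power3_eq_cube)
  also have "\<dots> = Pr + P (r, th) / r + Tt / r"
    unfolding r2[symmetric] using rp by (simp add: power2_eq_square power3_eq_cube)
  finally show ?thesis using D1 D2 by blast
qed



section \<open>One-variable pieces of psi\<close>

definition sq :: "real \<Rightarrow> real" where "sq y = sqrt (1 - (2*y-1)\<^sup>2)"
definition Cf :: "real \<Rightarrow> real" where "Cf y = cos (arccos (2*y-1) / sqrt 2)"
definition Sf :: "real \<Rightarrow> real" where "Sf y = sin (arccos (2*y-1) / sqrt 2)"
definition C1 :: "real \<Rightarrow> real" where "C1 y = sqrt 2 * Sf y / sq y"
definition C2 :: "real \<Rightarrow> real" where "C2 y = -2 * Cf y / (sq y)\<^sup>2 + 2 * sqrt 2 * (2*y-1) * Sf y / (sq y)^3"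
definition S1 :: "real \<Rightarrow> real" where "S1 y = - sqrt 2 * Cf y / sq y"
definition S2 :: "real \<Rightarrow> real" where "S2 y = -2 * Sf y / (sq y)\<^sup>2 - 2 * sqrt 2 * (2*y-1) * Cf y / (sq y)^3"

lemma w_pos: "0 < (y::real) \<Longrightarrow> y < 1 \<Longrightarrow> 0 < 1 - (2*y-1)\<^sup>2"
  by (auto simp: power2_eq_square algebra_simps intro!: mult_pos_pos)

lemma sq_pos: "0 < y \<Longrightarrow> y < 1 \<Longrightarrow> sq y > 0"
  unfolding sq_def using w_pos by simp

lemma sq_deriv: assumes "0 < y" "y < 1" shows "(sq has_real_derivative (-2*(2*y-1)/sq y)) (at y)"
proof -
  have h: "0 < 1 - (2*y-1)\<^sup>2" using w_pos assms by blast
  have "((\<lambda>y. 1 - (2*y-1)\<^sup>2) has_real_derivative (-(2*(2*y-1)*2))) (at y)"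
    by (auto intro!: derivative_eq_intros)
  from DERIV_chain2[OF DERIV_real_sqrt[OF h] this] show ?thesis unfolding sq_def o_def
    apply (rule DERIV_eq)
    using h by (simp add: field_simps)
qed

lemma A_deriv: assumes "0 < y" "y < 1" shows "((\<lambda>y. arccos (2*y-1)) has_real_derivative (-2 / sq y)) (at y)"
proof -
  have h2: "-1 < 2*y-1" "2*y-1 < 1" using assms by auto
  have "((\<lambda>y. 2*y-1) has_real_derivative 2) (at y)"
    by (auto intro!: derivative_eq_intros)
  from DERIV_chain2[OF DERIV_arccos[OF h2] this] show ?thesis unfolding sq_def
    by (rule DERIV_eq) (simp add: field_simps)
qed

lemma Cf_deriv: assumes "0 < y" "y < 1" shows "(Cf has_real_derivative C1 y) (at y)"
proof -
  have "((\<lambda>y. arccos (2*y-1) / sqrt 2) has_real_derivative (-2 / sq y / sqrt 2)) (at y)"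
    using A_deriv[OF assms] by (rule DERIV_cdivide)
  from DERIV_chain2[OF DERIV_cos this] show ?thesis unfolding Cf_def Sf_def C1_def
    apply (rule DERIV_eq)
    using sq_pos[OF assms] by (simp add: field_simps real_sqrt_mult_self)
qed

lemma Sf_deriv: assumes "0 < y" "y < 1" shows "(Sf has_real_derivative S1 y) (at y)"
proof -
  have "((\<lambda>y. arccos (2*y-1) / sqrt 2) has_real_derivative (-2 / sq y / sqrt 2)) (at y)"
    using A_deriv[OF assms] by (rule DERIV_cdivide)
  from DERIV_chain2[OF DERIV_sin this] show ?thesis unfolding Cf_def Sf_def S1_def
    apply (rule DERIV_eq)
    using sq_pos[OF assms] by (simp add: field_simps real_sqrt_mult_self)
qed

lemma C1_deriv: assumes "0 < y" "y < 1" shows "(C1 has_real_derivative C2 y) (at y)"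
proof -
  have p: "sq y > 0" using sq_pos[OF assms] .
  have "((\<lambda>y. sqrt 2 * Sf y / sq y) has_real_derivative
     ((sqrt 2 * S1 y) * sq y - sqrt 2 * Sf y * (-2*(2*y-1)/sq y)) / (sq y * sq y)) (at y)"
    by (rule DERIV_divide[OF DERIV_cmult[OF Sf_deriv[OF assms]] sq_deriv[OF assms]]) (use p in simp)
  thus ?thesis unfolding C1_def[abs_def]
    apply (rule DERIV_eq)
    unfolding C2_def S1_def using p by (simp add: field_simps power2_eq_square power3_eq_cube)
qed

lemma S1_deriv: assumes "0 < y" "y < 1" shows "(S1 has_real_derivative S2 y) (at y)"
proof -
  have p: "sq y > 0" using sq_pos[OF assms] .
  have "((\<lambda>y. - sqrt 2 * Cf y / sq y) has_real_derivative
     ((- sqrt 2 * C1 y) * sq y - (- sqrt 2) * Cf y * (-2*(2*y-1)/sq y)) / (sq y * sq y)) (at y)"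
    by (rule DERIV_divide[OF DERIV_cmult[OF Cf_deriv[OF assms]] sq_deriv[OF assms]]) (use p in simp)
  thus ?thesis unfolding S1_def[abs_def]
    apply (rule DERIV_eq)
    unfolding S2_def C1_def using p by (simp add: field_simps power2_eq_square power3_eq_cube)
qed

definition Rf :: "real \<Rightarrow> real \<Rightarrow> real" where "Rf g m = sqrt (2*m/g)"

lemma Rf_pos: "g > 0 \<Longrightarrow> m > 0 \<Longrightarrow> Rf g m > 0" unfolding Rf_def by simp

lemma Rf_deriv: assumes "g > 0" "m > 0" shows "(Rf g has_real_derivative 1 / (g * Rf g m)) (at m)"
proof -
  have h: "0 < 2*m/g" using assms by simp
  have "((\<lambda>m. 2*m/g) has_real_derivative 2/g) (at m)"
    using assms by (auto intro!: derivative_eq_intros)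
  from DERIV_chain2[OF DERIV_real_sqrt[OF h] this] show ?thesis unfolding Rf_def[abs_def]
    apply (rule DERIV_eq)
    using assms by (simp add: field_simps)
qed

lemma Rf1_deriv: assumes "g > 0" "m > 0"
  shows "((\<lambda>m. 1 / (g * Rf g m)) has_real_derivative - 1 / (g\<^sup>2 * (Rf g m)^3)) (at m)"
proof -
  have p: "Rf g m > 0" using Rf_pos assms by blast
  have "((\<lambda>m. 1 / (g * Rf g m)) has_real_derivative
      (0 * (g * Rf g m) - 1 * (g * (1 / (g * Rf g m)))) / ((g * Rf g m) * (g * Rf g m))) (at m)"
    by (rule DERIV_divide[OF DERIV_const DERIV_cmult[OF Rf_deriv[OF assms]]]) (use p assms in simp)
  thus ?thesis apply (rule DERIV_eq)
    using p assms by (simp add: field_simps power2_eq_square power3_eq_cube)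
qed



definition Cp :: "(nat \<Rightarrow> real) \<Rightarrow> real \<Rightarrow> real" where
  "Cp c x = c 1 * x\<^sup>2 + c 2 * (2*x*(1-x)) + c 3 * (1-x)\<^sup>2"
definition Cp1 :: "(nat \<Rightarrow> real) \<Rightarrow> real \<Rightarrow> real" where
  "Cp1 c x = c 1 * (2*x) + c 2 * (2 - 4*x) - c 3 * (2*(1-x))"
definition Cp2 :: "(nat \<Rightarrow> real) \<Rightarrow> real" where
  "Cp2 c = 2 * c 1 - 4 * c 2 + 2 * c 3"
definition Ap :: "(nat \<Rightarrow> nat \<Rightarrow> real) \<Rightarrow> real \<Rightarrow> real" where
  "Ap a x = Cp (\<lambda>k. Cp (\<lambda>i. a i k) x) x"
definition Ap1 :: "(nat \<Rightarrow> nat \<Rightarrow> real) \<Rightarrow> real \<Rightarrow> real" where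
  "Ap1 a x = Cp1 (\<lambda>k. Cp (\<lambda>i. a i k) x) x + Cp (\<lambda>k. Cp1 (\<lambda>i. a i k) x) x"
definition Ap2 :: "(nat \<Rightarrow> nat \<Rightarrow> real) \<Rightarrow> real \<Rightarrow> real" where
  "Ap2 a x = Cp2 (\<lambda>k. Cp (\<lambda>i. a i k) x) + 2 * Cp1 (\<lambda>k. Cp1 (\<lambda>i. a i k) x) x + Cp (\<lambda>k. Cp2 (\<lambda>i. a i k)) x"

lemma Cp_deriv: "(Cp c has_real_derivative Cp1 c x) (at x)"
  unfolding Cp_def[abs_def] Cp1_def
  by (rule DERIV_eq, (rule derivative_intros)+) (simp add: algebra_simps)

lemma Cp1_deriv: "(Cp1 c has_real_derivative Cp2 c) (at x)"
  unfolding Cp1_def[abs_def] Cp2_def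
  by (rule DERIV_eq, (rule derivative_intros)+) (simp add: algebra_simps)

lemma Ap_deriv: "(Ap a has_real_derivative Ap1 a x) (at x)"
  unfolding Ap_def[abs_def] Ap1_def Cp_def Cp1_def
  by (rule DERIV_eq, (rule derivative_intros)+) (simp add: algebra_simps)

lemma Ap1_deriv: "(Ap1 a has_real_derivative Ap2 a x) (at x)"
  unfolding Ap1_def[abs_def] Ap2_def Cp_def Cp1_def Cp2_def
  by (rule DERIV_eq, (rule derivative_intros)+) (simp add: algebra_simps)

definition Xt :: "real \<Rightarrow> real" where "Xt th = (1 + cos (sqrt 2 * th)) / 2"
definition Xt1 :: "real \<Rightarrow> real" where "Xt1 th = - (sqrt 2 / 2) * sin (sqrt 2 * th)"
definition Xt2 :: "real \<Rightarrow> real" where "Xt2 th = - cos (sqrt 2 * th)"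

lemma Xt_deriv: "(Xt has_real_derivative Xt1 th) (at th)"
  unfolding Xt_def[abs_def] Xt1_def
  by (auto intro!: derivative_eq_intros)

lemma Xt1_deriv: "(Xt1 has_real_derivative Xt2 th) (at th)"
  unfolding Xt1_def[abs_def] Xt2_def
  by (rule DERIV_eq, (rule derivative_intros)+) (simp add: algebra_simps)

lemma theta_chain:
  assumes d1: "\<And>x. (f has_real_derivative f1 x) (at x)" and d2: "\<And>x. (f1 has_real_derivative f2 x) (at x)"
  shows "((\<lambda>t. f (Xt t)) has_real_derivative f1 (Xt th) * Xt1 th) (at th)"
    and "((\<lambda>t. f1 (Xt t) * Xt1 t) has_real_derivative f2 (Xt th) * (Xt1 th)\<^sup>2 + f1 (Xt th) * Xt2 th) (at th)"
proof -
  show "((\<lambda>t. f (Xt t)) has_real_derivative f1 (Xt th) * Xt1 th) (at th)"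
    using DERIV_chain2[OF d1 Xt_deriv] .
  have "((\<lambda>t. f1 (Xt t) * Xt1 t) has_real_derivative (f2 (Xt th) * Xt1 th) * Xt1 th + Xt2 th * f1 (Xt th)) (at th)"
    by (rule DERIV_mult[OF DERIV_chain2[OF d2 Xt_deriv] Xt1_deriv])
  thus "((\<lambda>t. f1 (Xt t) * Xt1 t) has_real_derivative f2 (Xt th) * (Xt1 th)\<^sup>2 + f1 (Xt th) * Xt2 th) (at th)"
    by (rule DERIV_eq) (simp add: power2_eq_square algebra_simps)
qed

definition cth :: "(nat \<Rightarrow> real) \<Rightarrow> real \<Rightarrow> real" where "cth c t = Cp c (Xt t)"
definition cth1 :: "(nat \<Rightarrow> real) \<Rightarrow> real \<Rightarrow> real" where "cth1 c t = Cp1 c (Xt t) * Xt1 t"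
definition cth2 :: "(nat \<Rightarrow> real) \<Rightarrow> real \<Rightarrow> real" where "cth2 c t = Cp2 c * (Xt1 t)\<^sup>2 + Cp1 c (Xt t) * Xt2 t"
definition ath :: "(nat \<Rightarrow> nat \<Rightarrow> real) \<Rightarrow> real \<Rightarrow> real" where "ath a t = Ap a (Xt t)"
definition ath1 :: "(nat \<Rightarrow> nat \<Rightarrow> real) \<Rightarrow> real \<Rightarrow> real" where "ath1 a t = Ap1 a (Xt t) * Xt1 t"
definition ath2 :: "(nat \<Rightarrow> nat \<Rightarrow> real) \<Rightarrow> real \<Rightarrow> real" where "ath2 a t = Ap2 a (Xt t) * (Xt1 t)\<^sup>2 + Ap1 a (Xt t) * Xt2 t"

lemma cth_deriv: "(cth c has_real_derivative cth1 c t) (at t)"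
  unfolding cth_def[abs_def] cth1_def using theta_chain(1)[OF Cp_deriv Cp1_deriv] .
lemma cth1_deriv: "(cth1 c has_real_derivative cth2 c t) (at t)"
  unfolding cth1_def[abs_def] cth2_def using theta_chain(2)[OF Cp_deriv Cp1_deriv] .
lemma ath_deriv: "(ath a has_real_derivative ath1 a t) (at t)"
  unfolding ath_def[abs_def] ath1_def using theta_chain(1)[OF Ap_deriv Ap1_deriv] .
lemma ath1_deriv: "(ath1 a has_real_derivative ath2 a t) (at t)"
  unfolding ath1_def[abs_def] ath2_def using theta_chain(2)[OF Ap_deriv Ap1_deriv] .

section \<open>The polar components P and T\<close>

definition Pz :: "real \<Rightarrow> (nat \<Rightarrow> real) \<Rightarrow> (nat \<Rightarrow> nat \<Rightarrow> real) \<Rightarrow> real \<times> real \<Rightarrow> real" where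
  "Pz g c a z = 1 / fst z - (fst z / 2) * cth c (snd z) + (g * fst z ^ 3 / 4) * ath a (snd z)"
definition Tz :: "real \<Rightarrow> (nat \<Rightarrow> real) \<Rightarrow> (nat \<Rightarrow> nat \<Rightarrow> real) \<Rightarrow> real \<times> real \<Rightarrow> real" where
  "Tz g c a z = (sqrt 2 / (2 * fst z)) * cot (sqrt 2 * snd z) - (fst z / 4) * cth1 c (snd z)
      + (g * fst z ^ 3 / 16) * ath1 a (snd z)"

lemma sep_deriv:
  assumes "(f has_real_derivative f') (at a)" "(h has_real_derivative h') (at b)"
  shows "((\<lambda>z. f (fst z) * h (snd z)) has_derivative (\<lambda>v. f' * h b * fst v + f a * h' * snd v)) (at (a, b))"
proof -
  have A0: "(f has_real_derivative f') (at (fst (a,b)))" using assms(1) by simp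
  have A: "((\<lambda>z. f (fst z)) has_derivative (\<lambda>v. fst v * f')) (at (a, b))"
    using DERIV_compose_FDERIV[OF A0 has_derivative_fst[OF has_derivative_ident]] by simp
  have B0: "(h has_real_derivative h') (at (snd (a,b)))" using assms(2) by simp
  have B: "((\<lambda>z. h (snd z)) has_derivative (\<lambda>v. snd v * h')) (at (a, b))"
    using DERIV_compose_FDERIV[OF B0 has_derivative_snd[OF has_derivative_ident]] by simp
  show ?thesis
    by (rule has_derivative_eq_rhs[OF has_derivative_mult[OF A B]]) (auto simp: fun_eq_iff algebra_simps)
qed

lemma fst_deriv:
  assumes "(f has_real_derivative f') (at a)"
  shows "((\<lambda>z. f (fst z)) has_derivative (\<lambda>v. f' * fst v)) (at (a, b))"
proof -
  have A0: "(f has_real_derivative f') (at (fst (a,b)))" using assms(1) by simp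
  have A: "((\<lambda>z. f (fst z)) has_derivative (\<lambda>v. fst v * f')) (at (a, b))"
    using DERIV_compose_FDERIV[OF A0 has_derivative_fst[OF has_derivative_ident]] by simp
  thus ?thesis by (rule has_derivative_eq_rhs) (auto simp: fun_eq_iff algebra_simps)
qed

lemma Pz_deriv:
  assumes r: "r > 0"
  shows "(Pz g c a has_derivative (\<lambda>v. (- 1 / r\<^sup>2 - cth c th / 2 + 3 * g * r\<^sup>2 * ath a th / 4) * fst v
            + (- r * cth1 c th / 2 + g * r^3 * ath1 a th / 4) * snd v)) (at (r, th))"
proof -
  have d0: "((\<lambda>r. 1 / r) has_real_derivative - 1 / r\<^sup>2) (at r)"
    using r by (auto intro!: derivative_eq_intros simp: power2_eq_square)
  have d1: "((\<lambda>r. r / 2) has_real_derivative 1 / 2) (at r)"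
    by (auto intro!: derivative_eq_intros)
  have d2: "((\<lambda>r. g * r ^ 3 / 4) has_real_derivative 3 * g * r\<^sup>2 / 4) (at r)"
    by (auto intro!: derivative_eq_intros simp: power2_eq_square)
  have H: "((\<lambda>z. 1 / fst z - (fst z / 2) * cth c (snd z) + (g * fst z ^ 3 / 4) * ath a (snd z)) has_derivative
     (\<lambda>v. - 1 / r\<^sup>2 * fst v - (1 / 2 * cth c th * fst v + r / 2 * cth1 c th * snd v)
        + (3 * g * r\<^sup>2 / 4 * ath a th * fst v + g * r ^ 3 / 4 * ath1 a th * snd v))) (at (r, th))"
    by (intro has_derivative_add has_derivative_diff fst_deriv[OF d0]
          sep_deriv[OF d1 cth_deriv] sep_deriv[OF d2 ath_deriv])
  show ?thesis unfolding Pz_def[abs_def]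
    by (rule has_derivative_eq_rhs[OF H]) (auto simp: fun_eq_iff algebra_simps)
qed

lemma Tz_deriv:
  assumes r: "r > 0" and s: "sin (sqrt 2 * th) \<noteq> 0"
  shows "(Tz g c a has_derivative (\<lambda>v. (- sqrt 2 * cot (sqrt 2 * th) / (2 * r\<^sup>2) - cth1 c th / 4 + 3 * g * r\<^sup>2 * ath1 a th / 16) * fst v
            + (- 1 / (r * (sin (sqrt 2 * th))\<^sup>2) - r * cth2 c th / 4 + g * r^3 * ath2 a th / 16) * snd v)) (at (r, th))"
proof -
  have d0: "((\<lambda>r. sqrt 2 / (2 * r)) has_real_derivative - sqrt 2 / (2 * r\<^sup>2)) (at r)"
    using r by (auto intro!: derivative_eq_intros simp: power2_eq_square)
  have dc: "((\<lambda>t. cot (sqrt 2 * t)) has_real_derivative - sqrt 2 / (sin (sqrt 2 * th))\<^sup>2) (at th)"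
  proof -
    have "((\<lambda>t. sqrt 2 * t) has_real_derivative sqrt 2) (at th)"
      by (auto intro!: derivative_eq_intros)
    from DERIV_chain2[OF DERIV_cot[OF s] this] show ?thesis
      by (rule DERIV_eq) (simp add: field_simps)
  qed
  have d1: "((\<lambda>r. r / 4) has_real_derivative 1 / 4) (at r)"
    by (auto intro!: derivative_eq_intros)
  have d2: "((\<lambda>r. g * r ^ 3 / 16) has_real_derivative 3 * g * r\<^sup>2 / 16) (at r)"
    by (auto intro!: derivative_eq_intros simp: power2_eq_square)
  have H: "((\<lambda>z. (sqrt 2 / (2 * fst z)) * cot (sqrt 2 * snd z) - (fst z / 4) * cth1 c (snd z)
      + (g * fst z ^ 3 / 16) * ath1 a (snd z)) has_derivative
     (\<lambda>v. (- sqrt 2 / (2 * r\<^sup>2) * cot (sqrt 2 * th) * fst v + sqrt 2 / (2 * r) * (- sqrt 2 / (sin (sqrt 2 * th))\<^sup>2) * snd v)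
        - (1 / 4 * cth1 c th * fst v + r / 4 * cth2 c th * snd v)
        + (3 * g * r\<^sup>2 / 16 * ath1 a th * fst v + g * r ^ 3 / 16 * ath2 a th * snd v))) (at (r, th))"
    by (intro has_derivative_add has_derivative_diff sep_deriv[OF d0 dc]
          sep_deriv[OF d1 cth1_deriv] sep_deriv[OF d2 ath1_deriv])
  show ?thesis unfolding Tz_def[abs_def]
    by (rule has_derivative_eq_rhs[OF H]) (use r s in \<open>auto simp: fun_eq_iff algebra_simps\<close>)
qed



lemma bX_eq:
  assumes s12: "\<alpha> 1 2 = \<alpha> 2 1" and s13: "\<alpha> 1 3 = \<alpha> 3 1" and s23: "\<alpha> 2 3 = \<alpha> 3 2"
  shows "bX \<beta> \<delta> \<alpha> n x = x * (1 - x) * (Cp1 (\<lambda>k. \<beta> k - \<delta> k) x / 2 - n * Ap1 \<alpha> x / 4)"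
proof -
  have "4 * bX \<beta> \<delta> \<alpha> n x = 4 * (x * (1 - x) * (Cp1 (\<lambda>k. \<beta> k - \<delta> k) x / 2 - n * Ap1 \<alpha> x / 4))"
    apply (simp only: bX_def Ufun_def Cp_def Cp1_def Ap1_def)
    apply (simp only: s12 s13 s23)
    by (simp add: power2_eq_square field_simps)
  thus ?thesis by simp
qed

lemma bN_eq: "bN \<beta> \<delta> \<alpha> n x = n * Cp (\<lambda>k. \<beta> k - \<delta> k) x - n\<^sup>2 * Ap \<alpha> x"
  unfolding bN_def Ufun_def Cp_def Ap_def by (simp add: power2_eq_square algebra_simps)

section \<open>The domain\<close>

lemma sqrt2_gt1: "1 < sqrt (2::real)"
  by (rule real_less_rsqrt) simp

lemma a0_bounds: "pi/2 < pi / sqrt 2" "pi / sqrt 2 < pi"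
proof -
  have p: "pi > 0" by simp
  show "pi/2 < pi / sqrt 2" using sqrt2_less_2 sqrt2_gt1 p by (intro divide_strict_left_mono) auto
  show "pi / sqrt 2 < pi" using sqrt2_gt1 p by (simp add: divide_less_eq)
qed

lemma cos_a0: "cos (pi / sqrt 2) < 0"
proof -
  have "0 < cos (pi - pi / sqrt 2)"
    by (rule cos_gt_zero_pi) (use a0_bounds pi_gt_zero in linarith)+
  thus ?thesis by simp
qed

lemma sin_a0: "sin (pi / sqrt 2) > 0"
  by (rule sin_gt_zero) (use a0_bounds in auto)

lemma uconst_eq: "uconst = sin (pi / sqrt 2) / cos (pi / sqrt 2)"
  unfolding uconst_def tan_def by simp

lemma interior_Dom_iff: "s \<in> interior Dom \<longleftrightarrow> 0 < snd s \<and> uconst * fst s < snd s"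
proof
  assume "s \<in> interior Dom"
  then obtain e where e: "e > 0" "ball s e \<subseteq> Dom" by (meson mem_interior)
  have "(fst s, snd s - e/2) \<in> ball s e"
    using e by (cases s) (simp add: dist_Pair_Pair dist_real_def)
  hence "(fst s, snd s - e/2) \<in> Dom" using e by blast
  thus "0 < snd s \<and> uconst * fst s < snd s" using e unfolding Dom_def by auto
next
  assume a: "0 < snd s \<and> uconst * fst s < snd s"
  let ?O = "{s :: real \<times> real. 0 < snd s \<and> uconst * fst s < snd s}"
  have "open ?O"
    by (intro open_Collect_conj open_Collect_less continuous_intros)
  moreover have "?O \<subseteq> Dom" unfolding Dom_def by auto
  ultimately have "?O \<subseteq> interior Dom" using interior_maximal by blast
  thus "s \<in> interior Dom" using a by blast
qed

lemma open_interior_Dom: "open (interior Dom)" by simp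

lemma theta_le:
  assumes s2: "0 < s2" and u: "uconst * s1 < s2" and r: "r = sqrt (s1\<^sup>2 + s2\<^sup>2)"
  shows "arccos (s1 / r) \<le> pi / sqrt 2"
proof (rule ccontr)
  assume "\<not> ?thesis"
  hence gt: "arccos (s1 / r) > pi / sqrt 2" by simp
  have pos: "s1\<^sup>2 + s2\<^sup>2 > 0" using s2 by (simp add: sum_power2_gt_zero_iff)
  have rp: "r > 0" using pos r by simp
  have r2: "r\<^sup>2 = s1\<^sup>2 + s2\<^sup>2" using pos r by simp
  have e: "(s1/r)\<^sup>2 + (s2/r)\<^sup>2 = 1" using rp r2 s2 by (simp add: power_divide add_divide_distrib[symmetric])
  have b1: "\<bar>s1 / r\<bar> \<le> 1"
  proof -
    have "(s1/r)\<^sup>2 \<le> 1" using e by (metis le_add_same_cancel1 zero_le_power2)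
    thus ?thesis using abs_square_le_1 by blast
  qed
  have b2: "-1 \<le> s1/r" "s1/r \<le> 1" using b1 unfolding abs_le_iff by auto
  let ?t = "arccos (s1 / r)"
  have ct: "cos ?t = s1 / r" using b2 by simp
  have st: "sin ?t = s2 / r"
  proof -
    have "sin ?t = sqrt (1 - (s1/r)\<^sup>2)" using b2 by (simp add: sin_arccos)
    also have "1 - (s1/r)\<^sup>2 = (s2/r)\<^sup>2" using e by simp
    finally show ?thesis using s2 rp by simp
  qed
  have tle: "?t \<le> pi" using b2 by (rule arccos_ubound)
  have "sin (?t - pi / sqrt 2) \<ge> 0"
    by (rule sin_ge_zero) (use gt tle a0_bounds in auto)
  hence "sin ?t * cos (pi / sqrt 2) - cos ?t * sin (pi / sqrt 2) \<ge> 0" by (simp add: sin_diff)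
  hence "s2 * cos (pi / sqrt 2) - s1 * sin (pi / sqrt 2) \<ge> 0"
    unfolding ct st using rp by (simp add: field_simps)
  hence "s2 * cos (pi / sqrt 2) \<ge> s1 * sin (pi / sqrt 2)" by simp
  hence "s2 \<le> s1 * sin (pi / sqrt 2) / cos (pi / sqrt 2)"
    using cos_a0 by (simp add: le_divide_eq)
  thus False using u unfolding uconst_eq by (simp add: algebra_simps)
qed

lemma psi_eq: "psi g (n, x) = (Rf g n * Cf x, Rf g n * Sf x)"
  by (simp add: psi_def psi1_def psi2_def Rf_def Cf_def Sf_def)

lemma polar_basic:
  assumes s2: "0 < s2" and r: "r = sqrt (s1\<^sup>2 + s2\<^sup>2)"
  shows "r > 0" "r\<^sup>2 = s1\<^sup>2 + s2\<^sup>2" "-1 \<le> s1/r" "s1/r \<le> 1"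
    "cos (arccos (s1/r)) = s1/r" "sin (arccos (s1/r)) = s2/r"
    "0 \<le> arccos (s1/r)" "arccos (s1/r) \<le> pi"
proof -
  have pos: "s1\<^sup>2 + s2\<^sup>2 > 0" using s2 by (simp add: sum_power2_gt_zero_iff)
  show rp: "r > 0" using pos r by simp
  show r2: "r\<^sup>2 = s1\<^sup>2 + s2\<^sup>2" using pos r by simp
  have e: "(s1/r)\<^sup>2 + (s2/r)\<^sup>2 = 1" using rp r2 s2 by (simp add: power_divide add_divide_distrib[symmetric])
  have b1: "\<bar>s1 / r\<bar> \<le> 1"
  proof -
    have "(s1/r)\<^sup>2 \<le> 1" using e by (metis le_add_same_cancel1 zero_le_power2)
    thus ?thesis using abs_square_le_1 by blast
  qed
  show b2: "-1 \<le> s1/r" "s1/r \<le> 1" using b1 unfolding abs_le_iff by auto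
  show "cos (arccos (s1/r)) = s1/r" using b2 by simp
  show "sin (arccos (s1/r)) = s2/r"
  proof -
    have "sin (arccos (s1/r)) = sqrt (1 - (s1/r)\<^sup>2)" using b2 by (simp add: sin_arccos)
    also have "1 - (s1/r)\<^sup>2 = (s2/r)\<^sup>2" using e by simp
    finally show ?thesis using s2 rp by simp
  qed
  show "0 \<le> arccos (s1/r)" "arccos (s1/r) \<le> pi" using b2 by (auto intro: arccos_lbound arccos_ubound)
qed

lemma psi_inv:
  assumes g: "g > 0" and s2: "0 < s2" and u: "uconst * s1 < s2"
    and r: "r = sqrt (s1\<^sup>2 + s2\<^sup>2)" and th: "th = arccos (s1 / r)"
  shows "inv_into ({0<..} \<times> {0..1}) (psi g) (s1, s2) = (g * r\<^sup>2 / 2, Xt th)"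
    and "0 < Xt th" "Xt th < 1" "Cf (Xt th) = s1 / r" "Sf (Xt th) = s2 / r"
    and "sin (sqrt 2 * th) = sq (Xt th)" "cos (sqrt 2 * th) = 2 * Xt th - 1"
    and "Rf g (g * r\<^sup>2 / 2) = r"
proof -
  note pb = polar_basic[OF s2 r]
  have rp: "r > 0" using pb by simp
  have th0: "0 \<le> th" using pb th by simp
  have th1: "th \<le> pi / sqrt 2" using theta_le[OF s2 u r] th by simp
  have s2p: "sqrt 2 > 0" by simp
  have ph0: "0 \<le> sqrt 2 * th" using th0 by simp
  have ph1: "sqrt 2 * th \<le> pi" using th1 s2p by (simp add: le_divide_eq mult.commute)
  define x0 where "x0 = Xt th"
  have cx: "2 * x0 - 1 = cos (sqrt 2 * th)" unfolding x0_def Xt_def by (simp add: field_simps)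
  have ax: "arccos (2 * x0 - 1) = sqrt 2 * th" unfolding cx using ph0 ph1 by (rule arccos_cos)
  have ax2: "arccos (2 * x0 - 1) / sqrt 2 = th" unfolding ax by simp
  have Cf0: "Cf x0 = s1 / r" unfolding Cf_def ax2 using pb th by simp
  have Sf0: "Sf x0 = s2 / r" unfolding Sf_def ax2 using pb th by simp
  have c1: "0 \<le> 1 + cos (sqrt 2 * th)" using cos_ge_minus_one[of "sqrt 2 * th"] by linarith
  have c2: "1 + cos (sqrt 2 * th) \<le> 2" using cos_le_one[of "sqrt 2 * th"] by linarith
  have x0b1: "0 \<le> x0" unfolding x0_def Xt_def using c1 by simp
  have x0b2: "x0 \<le> 1" unfolding x0_def Xt_def using c2 by simp
  note x0b = x0b1 x0b2
  have R0: "Rf g (g * r\<^sup>2 / 2) = r" unfolding Rf_def using g rp by simp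
  show "Rf g (g * r\<^sup>2 / 2) = r" by (rule R0)
  have n0: "g * r\<^sup>2 / 2 > 0" using g rp by simp
  have img: "(s1, s2) \<in> psi g ` ({0<..} \<times> {0..1})"
  proof
    show "(s1, s2) = psi g (g * r\<^sup>2 / 2, x0)" unfolding psi_eq R0 Cf0 Sf0 using rp by simp
    show "(g * r\<^sup>2 / 2, x0) \<in> {0<..} \<times> {0..1}" using n0 x0b by simp
  qed
  obtain n x where nx: "inv_into ({0<..} \<times> {0..1}) (psi g) (s1, s2) = (n, x)" by fastforce
  have inA: "(n, x) \<in> {0<..} \<times> {0..1}" using inv_into_into[OF img] nx by simp
  have ps: "psi g (n, x) = (s1, s2)" using f_inv_into_f[OF img] nx by simp
  have np: "n > 0" and xb: "0 \<le> x" "x \<le> 1" using inA by auto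
  define R where "R = Rf g n"
  define t' where "t' = arccos (2 * x - 1) / sqrt 2"
  have Rp: "R > 0" unfolding R_def using Rf_pos g np by blast
  have e1: "s1 = R * cos t'" and e2: "s2 = R * sin t'"
    using ps unfolding psi_eq R_def t'_def Cf_def Sf_def by auto
  have xb2: "-1 \<le> 2*x-1" "2*x-1 \<le> 1" using xb by auto
  have t'0: "0 \<le> t'" unfolding t'_def using arccos_lbound[OF xb2] by simp
  have t'1: "t' \<le> pi"
  proof -
    have a0: "0 \<le> arccos (2*x-1)" using arccos_lbound[OF xb2] .
    have "arccos (2*x-1) * 1 \<le> arccos (2*x-1) * sqrt 2"
      by (rule mult_left_mono) (use a0 sqrt2_gt1 in auto)
    hence "t' \<le> arccos (2*x-1)" unfolding t'_def by (simp add: divide_le_eq)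
    thus ?thesis using arccos_ubound[OF xb2] by linarith
  qed
  have "s1\<^sup>2 + s2\<^sup>2 = R\<^sup>2 * ((cos t')\<^sup>2 + (sin t')\<^sup>2)" unfolding e1 e2 by (simp only: power_mult_distrib distrib_left)
  hence "s1\<^sup>2 + s2\<^sup>2 = R\<^sup>2" by simp
  hence Rr: "R = r" using r Rp by simp
  have tt: "th = t'" unfolding th e1 Rr using rp t'0 t'1 by (simp add: arccos_cos)
  have xx: "x = x0"
  proof -
    have "cos (sqrt 2 * th) = 2 * x - 1" unfolding tt t'_def using xb2 by simp
    thus ?thesis using cx by simp
  qed
  have nn: "n = g * r\<^sup>2 / 2"
  proof -
    have "sqrt (2 * n / g) = r" using Rr unfolding R_def Rf_def .
    moreover have "(sqrt (2 * n / g))\<^sup>2 = 2 * n / g" using np g by simp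
    ultimately have "2 * n / g = r\<^sup>2" by simp
    thus ?thesis using g by (simp add: field_simps)
  qed
  show "inv_into ({0<..} \<times> {0..1}) (psi g) (s1, s2) = (g * r\<^sup>2 / 2, Xt th)"
    using nx nn xx x0_def by simp
  show "Cf (Xt th) = s1 / r" "Sf (Xt th) = s2 / r" using Cf0 Sf0 x0_def by auto
  show "cos (sqrt 2 * th) = 2 * Xt th - 1" using cx x0_def by simp
  show "Xt th < 1"
  proof (rule ccontr)
    assume "\<not> Xt th < 1"
    hence "x0 = 1" using x0b x0_def by simp
    hence "Sf x0 = 0" unfolding Sf_def by simp
    thus False using Sf0 s2 rp by simp
  qed
  show "0 < Xt th"
  proof (rule ccontr)
    assume "\<not> 0 < Xt th"
    hence "x0 = 0" using x0b x0_def by simp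
    hence c0: "Cf x0 = cos (pi / sqrt 2)" and s0: "Sf x0 = sin (pi / sqrt 2)" unfolding Cf_def Sf_def by simp_all
    have "uconst * s1 = s2"
      unfolding uconst_eq using c0 s0 Cf0 Sf0 cos_a0 rp by (simp add: field_simps)
    thus False using u by simp
  qed
  show "sin (sqrt 2 * th) = sq (Xt th)"
  proof -
    have "sin (sqrt 2 * th) = sin (arccos (2 * x0 - 1))" unfolding ax ..
    also have "\<dots> = sq x0" unfolding sq_def using x0b by (simp add: sin_arccos)
    finally show ?thesis using x0_def by simp
  qed
qed



lemma gen_sep:
  fixes H H1 H2 :: "real \<Rightarrow> real"
  assumes g: "g > 0" and n: "n > 0" and x: "0 < x" "x < 1"
    and dH: "\<And>y. 0 < y \<Longrightarrow> y < 1 \<Longrightarrow> (H has_real_derivative H1 y) (at y)"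
    and dH1: "\<And>y. 0 < y \<Longrightarrow> y < 1 \<Longrightarrow> (H1 has_real_derivative H2 y) (at y)"
  shows "gen g \<beta> \<delta> \<alpha> (\<lambda>m y. Rf g m * H y) n x =
     bN \<beta> \<delta> \<alpha> n x * (1 / (g * Rf g n) * H x) + bX \<beta> \<delta> \<alpha> n x * (Rf g n * H1 x)
     + g * n * (- 1 / (g\<^sup>2 * (Rf g n)^3) * H x) + g * x * (1 - x) / (2 * n) * (Rf g n * H2 x)"
proof -
  have d1: "\<And>m. m > 0 \<Longrightarrow> deriv (\<lambda>m. Rf g m * H x) m = 1 / (g * Rf g m) * H x"
    by (rule DERIV_imp_deriv, rule DERIV_cmult_right, rule Rf_deriv) (use g in auto)
  have d2: "deriv (\<lambda>m. deriv (\<lambda>m'. Rf g m' * H x) m) n = - 1 / (g\<^sup>2 * (Rf g n)^3) * H x"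
  proof (rule DERIV_imp_deriv)
    have "((\<lambda>m. 1 / (g * Rf g m) * H x) has_real_derivative - 1 / (g\<^sup>2 * (Rf g n)^3) * H x) (at n)"
      by (rule DERIV_cmult_right, rule Rf1_deriv) (use g n in auto)
    thus "((\<lambda>m. deriv (\<lambda>m'. Rf g m' * H x) m) has_real_derivative - 1 / (g\<^sup>2 * (Rf g n)^3) * H x) (at n)"
      by (rule has_field_derivative_transform_within_open[where S="{0<..}"]) (use n d1 in auto)
  qed
  have d3: "\<And>y. 0 < y \<Longrightarrow> y < 1 \<Longrightarrow> deriv (\<lambda>y. Rf g n * H y) y = Rf g n * H1 y"
    by (rule DERIV_imp_deriv, rule DERIV_cmult, rule dH) auto
  have d4: "deriv (\<lambda>y. deriv (\<lambda>y'. Rf g n * H y') y) x = Rf g n * H2 x"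
  proof (rule DERIV_imp_deriv)
    have "((\<lambda>y. Rf g n * H1 y) has_real_derivative Rf g n * H2 x) (at x)"
      by (rule DERIV_cmult, rule dH1) (use x in auto)
    thus "((\<lambda>y. deriv (\<lambda>y'. Rf g n * H y') y) has_real_derivative Rf g n * H2 x) (at x)"
      by (rule has_field_derivative_transform_within_open[where S="{0<..<1}"]) (use x d3 in auto)
  qed
  show ?thesis unfolding gen_def d2 d4 d1[OF n] d3[OF x] ..
qed

lemma psi1_sep: "psi1 g = (\<lambda>m y. Rf g m * Cf y)"
  by (simp add: fun_eq_iff psi1_def Rf_def Cf_def)
lemma psi2_sep: "psi2 g = (\<lambda>m y. Rf g m * Sf y)"
  by (simp add: fun_eq_iff psi2_def Rf_def Sf_def)

lemma alg_main1:
  fixes r sn g n k CP AP CP1 AP1 Cfv Sfv w x BN BX P T :: real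
  assumes "r \<noteq> 0" "sn \<noteq> 0" "g \<noteq> 0" "n = g * r\<^sup>2 / 2" "k * k = 2" "x * (1 - x) = sn\<^sup>2 / 4"
    "BN = n*CP - n\<^sup>2*AP" "BX = x * (1 - x) * (CP1/2 - n*AP1/4)"
    "P = 1 / r - (r / 2) * CP + (g * r^3 / 4) * AP"
    "T = (k / (2 * r)) * (w / sn) - (r / 4) * (CP1 * (-(k/2) * sn)) + (g * r^3 / 16) * (AP1 * (-(k/2) * sn))"
  shows "- (BN * (1 / (g * r) * Cfv) + BX * (r * (k * Sfv / sn))
           + g * n * (- 1 / (g\<^sup>2 * r^3) * Cfv) + g * x * (1 - x) / (2 * n) * (r * (-2 * Cfv / sn\<^sup>2 + 2 * k * w * Sfv / sn^3)))
       = P * Cfv - T * Sfv"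
proof -
  have n0: "n \<noteq> 0" unfolding assms(4) using assms(1,3) by simp
  have e0: "g * x * (1 - x) = g * (sn\<^sup>2 / 4)" by (simp only: mult.assoc assms(6))
  have e: "g * x * (1 - x) / (2 * n) = g * (sn\<^sup>2 / 4) / (2 * n)" by (simp only: e0)
  show ?thesis unfolding e assms(7,8,9,10) assms(6) using assms(1-3,5) unfolding assms(4)
    by (simp add: field_simps power2_eq_square power3_eq_cube)
qed

lemma alg_main2:
  fixes r sn g n k CP AP CP1 AP1 Cfv Sfv w x BN BX P T :: real
  assumes "r \<noteq> 0" "sn \<noteq> 0" "g \<noteq> 0" "n = g * r\<^sup>2 / 2" "k * k = 2" "x * (1 - x) = sn\<^sup>2 / 4"
    "BN = n*CP - n\<^sup>2*AP" "BX = x * (1 - x) * (CP1/2 - n*AP1/4)"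
    "P = 1 / r - (r / 2) * CP + (g * r^3 / 4) * AP"
    "T = (k / (2 * r)) * (w / sn) - (r / 4) * (CP1 * (-(k/2) * sn)) + (g * r^3 / 16) * (AP1 * (-(k/2) * sn))"
  shows "- (BN * (1 / (g * r) * Sfv) + BX * (r * (- k * Cfv / sn))
           + g * n * (- 1 / (g\<^sup>2 * r^3) * Sfv) + g * x * (1 - x) / (2 * n) * (r * (-2 * Sfv / sn\<^sup>2 - 2 * k * w * Cfv / sn^3)))
       = P * Sfv + T * Cfv"
proof -
  have n0: "n \<noteq> 0" unfolding assms(4) using assms(1,3) by simp
  have e0: "g * x * (1 - x) = g * (sn\<^sup>2 / 4)" by (simp only: mult.assoc assms(6))
  have e: "g * x * (1 - x) / (2 * n) = g * (sn\<^sup>2 / 4) / (2 * n)" by (simp only: e0)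
  show ?thesis unfolding e assms(7,8,9,10) assms(6) using assms(1-3,5) unfolding assms(4)
    by (simp add: field_simps power2_eq_square power3_eq_cube)
qed

definition Ef :: "real \<Rightarrow> (nat \<Rightarrow> real) \<Rightarrow> (nat \<Rightarrow> nat \<Rightarrow> real) \<Rightarrow> real \<times> real \<Rightarrow> real \<times> real" where
  "Ef g c a s = (let r = sqrt ((fst s)\<^sup>2 + (snd s)\<^sup>2); th = arccos (fst s / r) in
     (Pz g c a (r, th) * (fst s / r) - Tz g c a (r, th) * (snd s / r),
      Pz g c a (r, th) * (snd s / r) + Tz g c a (r, th) * (fst s / r)))"

lemma qfield_eq:
  assumes g: "g > 0" and s12: "\<alpha> 1 2 = \<alpha> 2 1" and s13: "\<alpha> 1 3 = \<alpha> 3 1" and s23: "\<alpha> 2 3 = \<alpha> 3 2"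
    and s: "s \<in> interior Dom"
  shows "qfield g \<beta> \<delta> \<alpha> s = Ef g (\<lambda>k. \<beta> k - \<delta> k) \<alpha> s"
proof -
  obtain s1 s2 where sp: "s = (s1, s2)" by fastforce
  have s2: "0 < s2" and u: "uconst * s1 < s2" using s sp interior_Dom_iff by auto
  define r where "r = sqrt (s1\<^sup>2 + s2\<^sup>2)"
  define th where "th = arccos (s1 / r)"
  define c where "c = (\<lambda>k. \<beta> k - \<delta> k)"
  define x0 where "x0 = Xt th"
  define n0 where "n0 = g * r\<^sup>2 / 2"
  note pi = psi_inv[OF g s2 u r_def th_def, folded x0_def n0_def]
  have rp: "r > 0" using polar_basic[OF s2 r_def] by simp
  have x0: "0 < x0" "x0 < 1" using pi by auto
  have sqp: "sq x0 > 0" using sq_pos[OF x0] .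
  have n0p: "n0 > 0" unfolding n0_def using g rp by simp
  have R: "Rf g n0 = r" using pi by simp
  have G1: "gen g \<beta> \<delta> \<alpha> (psi1 g) n0 x0 =
     bN \<beta> \<delta> \<alpha> n0 x0 * (1 / (g * r) * Cf x0) + bX \<beta> \<delta> \<alpha> n0 x0 * (r * C1 x0)
     + g * n0 * (- 1 / (g\<^sup>2 * r^3) * Cf x0) + g * x0 * (1 - x0) / (2 * n0) * (r * C2 x0)"
    unfolding psi1_sep R[symmetric] by (rule gen_sep[OF g n0p x0 Cf_deriv C1_deriv])
  have G2: "gen g \<beta> \<delta> \<alpha> (psi2 g) n0 x0 =
     bN \<beta> \<delta> \<alpha> n0 x0 * (1 / (g * r) * Sf x0) + bX \<beta> \<delta> \<alpha> n0 x0 * (r * S1 x0)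
     + g * n0 * (- 1 / (g\<^sup>2 * r^3) * Sf x0) + g * x0 * (1 - x0) / (2 * n0) * (r * S2 x0)"
    unfolding psi2_sep R[symmetric] by (rule gen_sep[OF g n0p x0 Sf_deriv S1_deriv])
  have xx: "x0 * (1 - x0) = (sq x0)\<^sup>2 / 4"
  proof -
    have "(sq x0)\<^sup>2 = 1 - (2 * x0 - 1)\<^sup>2" unfolding sq_def using w_pos[OF x0] by simp
    thus ?thesis by (simp add: power2_eq_square algebra_simps)
  qed
  have kk: "sqrt 2 * sqrt 2 = (2::real)" by simp
  have hP: "Pz g c \<alpha> (r, th) = 1 / r - (r / 2) * Cp c x0 + (g * r^3 / 4) * Ap \<alpha> x0"
    unfolding Pz_def cth_def ath_def x0_def by simp
  have hT: "Tz g c \<alpha> (r, th) = (sqrt 2 / (2 * r)) * ((2 * x0 - 1) / sq x0)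
      - (r / 4) * (Cp1 c x0 * (-(sqrt 2/2) * sq x0)) + (g * r^3 / 16) * (Ap1 \<alpha> x0 * (-(sqrt 2/2) * sq x0))"
  proof -
    have cot: "cot (sqrt 2 * th) = (2 * x0 - 1) / sq x0" unfolding cot_def using pi by simp
    have x1: "Xt1 th = -(sqrt 2/2) * sq x0" unfolding Xt1_def using pi by simp
    have "Tz g c \<alpha> (r, th) = (sqrt 2 / (2 * r)) * cot (sqrt 2 * th)
      - (r / 4) * (Cp1 c x0 * Xt1 th) + (g * r^3 / 16) * (Ap1 \<alpha> x0 * Xt1 th)"
      by (simp add: Tz_def cth1_def ath1_def x0_def)
    thus ?thesis by (simp only: cot x1)
  qed
  have BN: "bN \<beta> \<delta> \<alpha> n0 x0 = n0 * Cp c x0 - n0\<^sup>2 * Ap \<alpha> x0" unfolding c_def by (rule bN_eq)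
  have BX: "bX \<beta> \<delta> \<alpha> n0 x0 = x0 * (1 - x0) * (Cp1 c x0 / 2 - n0 * Ap1 \<alpha> x0 / 4)"
    unfolding c_def by (rule bX_eq[OF s12 s13 s23])
  have A1: "- gen g \<beta> \<delta> \<alpha> (psi1 g) n0 x0 = Pz g c \<alpha> (r, th) * Cf x0 - Tz g c \<alpha> (r, th) * Sf x0"
    unfolding G1 C1_def C2_def
    by (rule alg_main1[OF _ _ _ n0_def kk xx BN BX hP hT]) (use rp sqp g in auto)
  have A2: "- gen g \<beta> \<delta> \<alpha> (psi2 g) n0 x0 = Pz g c \<alpha> (r, th) * Sf x0 + Tz g c \<alpha> (r, th) * Cf x0"
    unfolding G2 S1_def S2_def
    by (rule alg_main2[OF _ _ _ n0_def kk xx BN BX hP hT]) (use rp sqp g in auto)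
  have inv: "inv_into ({0<..} \<times> {0..1}) (psi g) s = (n0, x0)" using pi sp by simp
  show ?thesis
    unfolding qfield_def inv Ef_def sp Let_def using A1 A2 pi r_def th_def c_def
    by (simp add: Let_def)
qed



lemma partial1:
  assumes "(Q has_derivative (\<lambda>h. q \<bullet> h)) (at (a, b))"
  shows "((\<lambda>u. Q (u, b)) has_real_derivative fst q) (at a)"
proof -
  have p: "((\<lambda>u. (u, b)) has_derivative (\<lambda>h. (h, 0))) (at a)"
    by (auto intro!: derivative_eq_intros)
  have "((\<lambda>u. Q (u, b)) has_derivative (\<lambda>h. q \<bullet> (h, 0))) (at a)"
    using has_derivative_compose[OF p assms] by simp
  thus ?thesis unfolding has_field_derivative_def
    by (rule has_derivative_eq_rhs) (auto simp: fun_eq_iff inner_Pair_0)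
qed

lemma partial2:
  assumes "(Q has_derivative (\<lambda>h. q \<bullet> h)) (at (a, b))"
  shows "((\<lambda>u. Q (a, u)) has_real_derivative snd q) (at b)"
proof -
  have p: "((\<lambda>u. (a, u)) has_derivative (\<lambda>h. (0, h))) (at b)"
    by (auto intro!: derivative_eq_intros)
  have "((\<lambda>u. Q (a, u)) has_derivative (\<lambda>h. q \<bullet> (0, h))) (at b)"
    using has_derivative_compose[OF p assms] by simp
  thus ?thesis unfolding has_field_derivative_def
    by (rule has_derivative_eq_rhs) (auto simp: fun_eq_iff inner_Pair_0)
qed

lemma Ffun_formula:
  fixes Q :: "real \<times> real \<Rightarrow> real"
  assumes g: "g > 0" and s12: "\<alpha> 1 2 = \<alpha> 2 1" and s13: "\<alpha> 1 3 = \<alpha> 3 1" and s23: "\<alpha> 2 3 = \<alpha> 3 2"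
    and gradQ: "\<And>s. s \<in> interior Dom \<Longrightarrow> (Q has_derivative (\<lambda>h. qfield g \<beta> \<delta> \<alpha> s \<bullet> h)) (at s)"
    and s: "s = (s1, s2)" "s \<in> interior Dom"
    and r: "r = sqrt (s1\<^sup>2 + s2\<^sup>2)" and th: "th = arccos (s1 / r)"
  shows "Ffun Q s = (Pz g (\<lambda>k. \<beta> k - \<delta> k) \<alpha> (r, th))\<^sup>2 + (Tz g (\<lambda>k. \<beta> k - \<delta> k) \<alpha> (r, th))\<^sup>2
     - ((- 1 / r\<^sup>2 - cth (\<lambda>k. \<beta> k - \<delta> k) th / 2 + 3 * g * r\<^sup>2 * ath \<alpha> th / 4)
        + Pz g (\<lambda>k. \<beta> k - \<delta> k) \<alpha> (r, th) / r
        + (- 1 / (r * (sin (sqrt 2 * th))\<^sup>2) - r * cth2 (\<lambda>k. \<beta> k - \<delta> k) th / 4 + g * r^3 * ath2 \<alpha> th / 16) / r)"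
proof -
  define c where "c = (\<lambda>k. \<beta> k - \<delta> k)"
  define P where "P = Pz g c \<alpha>"
  define T where "T = Tz g c \<alpha>"
  have s2: "0 < s2" and u: "uconst * s1 < s2" using s interior_Dom_iff by auto
  note pb = polar_basic[OF s2 r]
  have rp: "r > 0" using pb by simp
  note pi = psi_inv[OF g s2 u r th]
  have sn: "sin (sqrt 2 * th) \<noteq> 0" using pi sq_pos[of "Xt th"] by simp
  have EQ: "\<And>z. z \<in> interior Dom \<Longrightarrow> qfield g \<beta> \<delta> \<alpha> z = Ef g c \<alpha> z"
    unfolding c_def using qfield_eq[OF g s12 s13 s23] by blast
  have dQ1: "\<And>a b. (a, b) \<in> interior Dom \<Longrightarrow> deriv (\<lambda>u. Q (u, b)) a = fst (Ef g c \<alpha> (a, b))"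
    using partial1[OF gradQ] EQ by (metis DERIV_imp_deriv)
  have dQ2: "\<And>a b. (a, b) \<in> interior Dom \<Longrightarrow> deriv (\<lambda>u. Q (a, u)) b = snd (Ef g c \<alpha> (a, b))"
    using partial2[OF gradQ] EQ by (metis DERIV_imp_deriv)
  have Es: "Ef g c \<alpha> s = (P (r, th) * (s1 / r) - T (r, th) * (s2 / r), P (r, th) * (s2 / r) + T (r, th) * (s1 / r))"
    unfolding Ef_def s P_def T_def using r th by (simp add: Let_def)
  have grad: "grad2 Q s = Ef g c \<alpha> s" unfolding grad2_def s using dQ1 dQ2 s by simp
  have ng: "(norm (grad2 Q s))\<^sup>2 = (P (r, th))\<^sup>2 + (T (r, th))\<^sup>2"
  proof -
    have "(norm (grad2 Q s))\<^sup>2 = (P (r, th) * (s1 / r) - T (r, th) * (s2 / r))\<^sup>2 + (P (r, th) * (s2 / r) + T (r, th) * (s1 / r))\<^sup>2"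
      unfolding grad Es norm_Pair by simp
    also have "\<dots> = ((P (r, th))\<^sup>2 + (T (r, th))\<^sup>2) * ((s1\<^sup>2 + s2\<^sup>2) / r\<^sup>2)"
      using rp by (simp add: power2_eq_square field_simps)
    also have "(s1\<^sup>2 + s2\<^sup>2) / r\<^sup>2 = 1" using pb s2 by simp
    finally show ?thesis by simp
  qed
  have dP: "(P has_derivative (\<lambda>v. (- 1 / r\<^sup>2 - cth c th / 2 + 3 * g * r\<^sup>2 * ath \<alpha> th / 4) * fst v
            + (- r * cth1 c th / 2 + g * r^3 * ath1 \<alpha> th / 4) * snd v)) (at (r, th))"
    unfolding P_def by (rule Pz_deriv[OF rp])
  have dT: "(T has_derivative (\<lambda>v. (- sqrt 2 * cot (sqrt 2 * th) / (2 * r\<^sup>2) - cth1 c th / 4 + 3 * g * r\<^sup>2 * ath1 \<alpha> th / 16) * fst v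
            + (- 1 / (r * (sin (sqrt 2 * th))\<^sup>2) - r * cth2 c th / 4 + g * r^3 * ath2 \<alpha> th / 16) * snd v)) (at (r, th))"
    unfolding T_def by (rule Tz_deriv[OF rp sn])
  obtain D1 D2 where
    D1: "((\<lambda>t. P (sqrt (t\<^sup>2 + s2\<^sup>2), arccos (t / sqrt (t\<^sup>2 + s2\<^sup>2))) * (t / sqrt (t\<^sup>2 + s2\<^sup>2))
        - T (sqrt (t\<^sup>2 + s2\<^sup>2), arccos (t / sqrt (t\<^sup>2 + s2\<^sup>2))) * (s2 / sqrt (t\<^sup>2 + s2\<^sup>2)))
      has_real_derivative D1) (at s1)" and
    D2: "((\<lambda>t. P (sqrt (s1\<^sup>2 + t\<^sup>2), arccos (s1 / sqrt (s1\<^sup>2 + t\<^sup>2))) * (t / sqrt (s1\<^sup>2 + t\<^sup>2))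
        + T (sqrt (s1\<^sup>2 + t\<^sup>2), arccos (s1 / sqrt (s1\<^sup>2 + t\<^sup>2))) * (s1 / sqrt (s1\<^sup>2 + t\<^sup>2)))
      has_real_derivative D2) (at s2)" and
    DS: "D1 + D2 = (- 1 / r\<^sup>2 - cth c th / 2 + 3 * g * r\<^sup>2 * ath \<alpha> th / 4) + P (r, th) / r
          + (- 1 / (r * (sin (sqrt 2 * th))\<^sup>2) - r * cth2 c th / 4 + g * r^3 * ath2 \<alpha> th / 16) / r"
    using polar_div[OF s2 r th dP dT] by blast
  have open1: "open {t. uconst * t < s2}" by (intro open_Collect_less continuous_intros)
  have open2: "open {t. 0 < t \<and> uconst * s1 < t}" by (intro open_Collect_conj open_Collect_less continuous_intros)
  have L1: "deriv (\<lambda>t. deriv (\<lambda>u. Q (u, s2)) t) s1 = D1"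
  proof (rule DERIV_imp_deriv, rule has_field_derivative_transform_within_open[OF D1 open1])
    show "s1 \<in> {t. uconst * t < s2}" using u by simp
    fix t assume "t \<in> {t. uconst * t < s2}"
    hence "(t, s2) \<in> interior Dom" using s2 interior_Dom_iff by simp
    thus "P (sqrt (t\<^sup>2 + s2\<^sup>2), arccos (t / sqrt (t\<^sup>2 + s2\<^sup>2))) * (t / sqrt (t\<^sup>2 + s2\<^sup>2))
        - T (sqrt (t\<^sup>2 + s2\<^sup>2), arccos (t / sqrt (t\<^sup>2 + s2\<^sup>2))) * (s2 / sqrt (t\<^sup>2 + s2\<^sup>2))
        = deriv (\<lambda>u. Q (u, s2)) t"
      using dQ1 unfolding Ef_def P_def T_def by (simp add: Let_def)
  qed
  have L2: "deriv (\<lambda>t. deriv (\<lambda>u. Q (s1, u)) t) s2 = D2"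
  proof (rule DERIV_imp_deriv, rule has_field_derivative_transform_within_open[OF D2 open2])
    show "s2 \<in> {t. 0 < t \<and> uconst * s1 < t}" using u s2 by simp
    fix t assume "t \<in> {t. 0 < t \<and> uconst * s1 < t}"
    hence "(s1, t) \<in> interior Dom" using interior_Dom_iff by simp
    thus "P (sqrt (s1\<^sup>2 + t\<^sup>2), arccos (s1 / sqrt (s1\<^sup>2 + t\<^sup>2))) * (t / sqrt (s1\<^sup>2 + t\<^sup>2))
        + T (sqrt (s1\<^sup>2 + t\<^sup>2), arccos (s1 / sqrt (s1\<^sup>2 + t\<^sup>2))) * (s1 / sqrt (s1\<^sup>2 + t\<^sup>2))
        = deriv (\<lambda>u. Q (s1, u)) t"
      using dQ2 unfolding Ef_def P_def T_def by (simp add: Let_def)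
  qed
  have lap: "lap2 Q s = D1 + D2" unfolding lap2_def s using L1 L2 by simp
  show ?thesis unfolding Ffun_def ng lap DS P_def T_def c_def ..
qed



lemma bounds_exist:
  "\<exists>K\<ge>1. \<forall>x\<in>{0..1}. \<bar>Cp c x\<bar> \<le> K \<and> \<bar>Cp1 c x\<bar> \<le> K \<and> \<bar>Cp2 c\<bar> \<le> K
      \<and> \<bar>Ap a x\<bar> \<le> K \<and> \<bar>Ap1 a x\<bar> \<le> K \<and> \<bar>Ap2 a x\<bar> \<le> K"
proof -
  define h where "h x = \<bar>Cp c x\<bar> + \<bar>Cp1 c x\<bar> + \<bar>Cp2 c\<bar> + \<bar>Ap a x\<bar> + \<bar>Ap1 a x\<bar> + \<bar>Ap2 a x\<bar>" for x
  have "continuous_on {0..1::real} h"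
    unfolding h_def Cp_def Cp1_def Cp2_def Ap_def Ap1_def Ap2_def by (intro continuous_intros)
  then obtain xm where xm: "xm \<in> {0..1}" "\<forall>y\<in>{0..1}. h y \<le> h xm"
    using continuous_attains_sup[of "{0..1::real}" h] by auto
  show ?thesis
  proof (intro exI[of _ "max 1 (h xm)"] conjI ballI)
    show "1 \<le> max 1 (h xm)" by simp
    fix x :: real assume x: "x \<in> {0..1}"
    have hx: "h x \<le> max 1 (h xm)" using xm(2) x by (meson max.coboundedI2)
    have nn: "0 \<le> \<bar>Cp c x\<bar>" "0 \<le> \<bar>Cp1 c x\<bar>" "0 \<le> \<bar>Cp2 c\<bar>" "0 \<le> \<bar>Ap a x\<bar>" "0 \<le> \<bar>Ap1 a x\<bar>" "0 \<le> \<bar>Ap2 a x\<bar>"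
      by simp_all
    have hd: "h x = \<bar>Cp c x\<bar> + \<bar>Cp1 c x\<bar> + \<bar>Cp2 c\<bar> + \<bar>Ap a x\<bar> + \<bar>Ap1 a x\<bar> + \<bar>Ap2 a x\<bar>"
      by (simp add: h_def)
    show "\<bar>Cp c x\<bar> \<le> max 1 (h xm)" using hx hd nn by linarith
    show "\<bar>Cp1 c x\<bar> \<le> max 1 (h xm)" using hx hd nn by linarith
    show "\<bar>Cp2 c\<bar> \<le> max 1 (h xm)" using hx hd nn by linarith
    show "\<bar>Ap a x\<bar> \<le> max 1 (h xm)" using hx hd nn by linarith
    show "\<bar>Ap1 a x\<bar> \<le> max 1 (h xm)" using hx hd nn by linarith
    show "\<bar>Ap2 a x\<bar> \<le> max 1 (h xm)" using hx hd nn by linarith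
  qed
qed

lemma amin_exist:
  assumes H1: "\<And>z :: nat \<Rightarrow> real. (\<forall>i\<in>{1..3}. z i \<ge> 0) \<Longrightarrow> (\<exists>i\<in>{1..3}. z i \<noteq> 0) \<Longrightarrow>
               (\<Sum>i=1..3. \<Sum>j=1..3. a i j * z i * z j) > 0"
  shows "\<exists>m>0. \<forall>x\<in>{0..1}. Ap a x \<ge> m"
proof -
  have pos: "Ap a x > 0" if x: "x \<in> {0..1}" for x
  proof -
    define z where "z i = (if i = 1 then x\<^sup>2 else if i = 2 then 2*x*(1-x) else (1-x)\<^sup>2)" for i :: nat
    have z0: "\<forall>i\<in>{1..3}. z i \<ge> 0" using x unfolding z_def by auto
    have z1: "\<exists>i\<in>{1..3}. z i \<noteq> 0"
    proof (cases "x = 0")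
      case True thus ?thesis unfolding z_def by (intro bexI[of _ 3]) auto
    next
      case False thus ?thesis unfolding z_def by (intro bexI[of _ 1]) auto
    qed
    have e: "{1..3::nat} = {1,2,3}" by auto
    have "(\<Sum>i=1..3. \<Sum>j=1..3. a i j * z i * z j) = Ap a x"
      unfolding e Ap_def Cp_def z_def by (simp add: algebra_simps power2_eq_square)
    thus ?thesis using H1[OF z0 z1] by simp
  qed
  have "continuous_on {0..1::real} (Ap a)"
    unfolding Ap_def Cp_def by (intro continuous_intros)
  then obtain xm where xm: "xm \<in> {0..1}" "\<forall>y\<in>{0..1}. Ap a xm \<le> Ap a y"
    using continuous_attains_inf[of "{0..1::real}" "Ap a"] by auto
  show ?thesis by (rule exI[of _ "Ap a xm"]) (use xm pos in auto)
qed

lemma F_bounds: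
  fixes Q :: "real \<times> real \<Rightarrow> real"
  assumes g: "g > 0" and s12: "\<alpha> 1 2 = \<alpha> 2 1" and s13: "\<alpha> 1 3 = \<alpha> 3 1" and s23: "\<alpha> 2 3 = \<alpha> 3 2"
    and gradQ: "\<And>s. s \<in> interior Dom \<Longrightarrow> (Q has_derivative (\<lambda>h. qfield g \<beta> \<delta> \<alpha> s \<bullet> h)) (at s)"
    and s: "s \<in> interior Dom"
    and K1: "K \<ge> 1"
    and K: "\<forall>x\<in>{0..1}. \<bar>Cp (\<lambda>k. \<beta> k - \<delta> k) x\<bar> \<le> K \<and> \<bar>Cp1 (\<lambda>k. \<beta> k - \<delta> k) x\<bar> \<le> K \<and> \<bar>Cp2 (\<lambda>k. \<beta> k - \<delta> k)\<bar> \<le> K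
      \<and> \<bar>Ap \<alpha> x\<bar> \<le> K \<and> \<bar>Ap1 \<alpha> x\<bar> \<le> K \<and> \<bar>Ap2 \<alpha> x\<bar> \<le> K"
    and m: "m > 0" "\<forall>x\<in>{0..1}. Ap \<alpha> x \<ge> m"
  shows "Ffun Q s \<ge> - g * (norm s)\<^sup>2 * K - K"
    and "(norm s)\<^sup>2 \<ge> 2 * K / (g * m) \<Longrightarrow>
         Ffun Q s \<ge> (norm s)\<^sup>2 * (g * m / 4 * (norm s)\<^sup>2 - K / 2)\<^sup>2 - g * K * (norm s)\<^sup>2 - K"
proof -
  obtain s1 s2 where sp: "s = (s1, s2)" by fastforce
  have s2: "0 < s2" and u: "uconst * s1 < s2" using s sp interior_Dom_iff by auto
  define r where "r = sqrt (s1\<^sup>2 + s2\<^sup>2)"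
  define th where "th = arccos (s1 / r)"
  define c where "c = (\<lambda>k. \<beta> k - \<delta> k)"
  note pb = polar_basic[OF s2 r_def]
  have rp: "r > 0" using pb by simp
  note pi = psi_inv[OF g s2 u r_def th_def]
  define x where "x = Xt th"
  have x01: "x \<in> {0..1}" using pi x_def by auto
  define S where "S = sin (sqrt 2 * th)"
  have Sn: "S \<noteq> 0" unfolding S_def using pi sq_pos[of "Xt th"] by simp
  define C where "C = cth c th"
  define A where "A = ath \<alpha> th"
  define C2 where "C2 = cth2 c th"
  define A2 where "A2 = ath2 \<alpha> th"
  define T where "T = Tz g c \<alpha> (r, th)"
  have FF: "Ffun Q s = (1 / r - (r / 2) * C + (g * r ^ 3 / 4) * A)\<^sup>2 + T\<^sup>2
     - ((- 1 / r\<^sup>2 - C / 2 + 3 * g * r\<^sup>2 * A / 4) + (1 / r - (r / 2) * C + (g * r ^ 3 / 4) * A) / r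
        + (- 1 / (r * S\<^sup>2) - r * C2 / 4 + g * r^3 * A2 / 16) / r)"
    using Ffun_formula[OF g s12 s13 s23 gradQ sp s r_def th_def]
    unfolding C_def A_def C2_def A2_def T_def S_def c_def by (simp add: Pz_def)
  have Feq: "Ffun Q s = 1 / r\<^sup>2 + (r * (g * r\<^sup>2 * A / 4 - C / 2))\<^sup>2 - g * r\<^sup>2 * A / 2 + T\<^sup>2
      + 1 / (r\<^sup>2 * S\<^sup>2) + C2 / 4 - g * r\<^sup>2 * A2 / 16"
    unfolding FF using rp Sn by (simp add: field_simps power2_eq_square power3_eq_cube)
  have nn: "0 \<le> 1 / r\<^sup>2" "0 \<le> T\<^sup>2" "0 \<le> 1 / (r\<^sup>2 * S\<^sup>2)" by simp_all
  have base: "Ffun Q s \<ge> (r * (g * r\<^sup>2 * A / 4 - C / 2))\<^sup>2 - g * r\<^sup>2 * A / 2 + C2 / 4 - g * r\<^sup>2 * A2 / 16"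
    using Feq nn by linarith
  have Kx: "\<bar>Cp c x\<bar> \<le> K" "\<bar>Cp1 c x\<bar> \<le> K" "\<bar>Cp2 c\<bar> \<le> K" "\<bar>Ap \<alpha> x\<bar> \<le> K" "\<bar>Ap1 \<alpha> x\<bar> \<le> K" "\<bar>Ap2 \<alpha> x\<bar> \<le> K"
    using K x01 unfolding c_def by auto
  have X1: "(Xt1 th)\<^sup>2 \<le> 1"
  proof -
    have "(Xt1 th)\<^sup>2 = (sin (sqrt 2 * th))\<^sup>2 / 2" unfolding Xt1_def by (simp add: power2_eq_square field_simps)
    also have "\<dots> \<le> 1"
    proof -
      have h: "(sin (sqrt 2 * th))\<^sup>2 \<le> 1" using abs_sin_le_one abs_square_le_1 by blast
      thus ?thesis by linarith
    qed
    finally show ?thesis .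
  qed
  have X2: "\<bar>Xt2 th\<bar> \<le> 1" unfolding Xt2_def by simp
  have X1n: "0 \<le> (Xt1 th)\<^sup>2" by simp
  have bC: "\<bar>C\<bar> \<le> K" unfolding C_def cth_def x_def[symmetric] using Kx by simp
  have bA: "A \<le> K" "m \<le> A" unfolding A_def ath_def x_def[symmetric] using Kx m x01 by auto
  have bound2: "\<bar>p * q + p' * q'\<bar> \<le> 2 * K" if "\<bar>p\<bar> \<le> K" "\<bar>p'\<bar> \<le> K" "0 \<le> q" "q \<le> 1" "\<bar>q'\<bar> \<le> 1" for p q p' q' :: real
  proof -
    have "\<bar>p * q\<bar> \<le> K * 1" unfolding abs_mult using that by (intro mult_mono) auto
    moreover have "\<bar>p' * q'\<bar> \<le> K * 1" unfolding abs_mult using that by (intro mult_mono) auto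
    ultimately show ?thesis by (simp add: abs_triangle_ineq order_trans[OF abs_triangle_ineq])
  qed
  have bC2: "\<bar>C2\<bar> \<le> 2 * K" unfolding C2_def cth2_def x_def[symmetric]
    by (rule bound2) (use Kx X1 X2 X1n in auto)
  have bA2: "\<bar>A2\<bar> \<le> 2 * K" unfolding A2_def ath2_def x_def[symmetric]
    by (rule bound2) (use Kx X1 X2 X1n in auto)
  have ns: "(norm s)\<^sup>2 = r\<^sup>2" unfolding sp norm_Pair r_def by simp
  define \<rho> where "\<rho> = r\<^sup>2"
  have \<rho>0: "0 \<le> \<rho>" unfolding \<rho>_def by simp
  have g\<rho>: "0 \<le> g * \<rho>" using g \<rho>0 by simp
  define GA where "GA = g * \<rho> * A"
  define GK where "GK = g * \<rho> * K"
  define GA2 where "GA2 = g * \<rho> * A2"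
  define Y2 where "Y2 = \<rho> * (g * \<rho> * A / 4 - C / 2)\<^sup>2"
  have t1: "GA \<le> GK" unfolding GA_def GK_def using bA g\<rho> by (simp add: mult_left_mono)
  have t2: "GA2 \<le> 2 * GK"
  proof -
    have "\<bar>g * \<rho> * A2\<bar> \<le> g * \<rho> * (2 * K)" unfolding abs_mult using bA2 g\<rho> g \<rho>0
      by (simp add: mult_left_mono)
    thus ?thesis unfolding GA2_def GK_def by linarith
  qed
  have GK0: "0 \<le> GK" unfolding GK_def using g\<rho> K1 by simp
  have Ysq: "(r * (g * r\<^sup>2 * A / 4 - C / 2))\<^sup>2 = Y2"
    unfolding Y2_def \<rho>_def by (simp add: power_mult_distrib)
  have b1: "Ffun Q s \<ge> Y2 - GA / 2 + C2 / 4 - GA2 / 16"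
    using base unfolding Ysq GA_def GA2_def \<rho>_def .
  have b16: "16 * Ffun Q s \<ge> 16 * Y2 - 8 * GA + 4 * C2 - GA2"
    using b1 by (simp add: field_simps)
  have c2b: "- 4 * K \<le> C2" using bC2 K1 by linarith
  have main0: "Ffun Q s \<ge> Y2 - GK - K" using b16 t1 t2 GK0 c2b K1 by linarith
  have main: "Ffun Q s \<ge> \<rho> * (g * \<rho> * A / 4 - C / 2)\<^sup>2 - g * K * \<rho> - K"
    using main0 unfolding Y2_def GK_def by (simp add: algebra_simps)
  have sqn: "0 \<le> \<rho> * (g * \<rho> * A / 4 - C / 2)\<^sup>2" using \<rho>0 by simp
  show "Ffun Q s \<ge> - g * (norm s)\<^sup>2 * K - K"
    using main sqn unfolding ns \<rho>_def[symmetric] by (simp add: algebra_simps)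
  assume big: "(norm s)\<^sup>2 \<ge> 2 * K / (g * m)"
  have big': "g * m * \<rho> / 4 \<ge> K / 2"
    using big g m unfolding ns \<rho>_def[symmetric] by (simp add: field_simps)
  have m1: "g * \<rho> * m \<le> g * \<rho> * A" using bA g\<rho> by (simp add: mult_left_mono)
  have lo: "0 \<le> g * m / 4 * \<rho> - K / 2" using big' by (simp add: field_simps)
  have lo2: "g * m / 4 * \<rho> - K / 2 \<le> g * \<rho> * A / 4 - C / 2"
    using m1 bC by (simp add: field_simps)
  have "(g * m / 4 * \<rho> - K / 2)\<^sup>2 \<le> (g * \<rho> * A / 4 - C / 2)\<^sup>2"
    by (rule power_mono[OF lo2 lo])
  hence "\<rho> * (g * m / 4 * \<rho> - K / 2)\<^sup>2 \<le> \<rho> * (g * \<rho> * A / 4 - C / 2)\<^sup>2"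
    using \<rho>0 by (rule mult_left_mono)
  thus "Ffun Q s \<ge> (norm s)\<^sup>2 * (g * m / 4 * (norm s)\<^sup>2 - K / 2)\<^sup>2 - g * K * (norm s)\<^sup>2 - K"
    using main unfolding ns \<rho>_def[symmetric] by linarith
qed



lemma B_lim: assumes "A > 0"
  shows "filterlim (\<lambda>\<rho>::real. \<rho> * (A * \<rho> - K / 2)\<^sup>2 - G * \<rho> - K) at_top at_top"
  using assms by real_asymp

theorem mainTheorem14:
  fixes \<gamma> :: real and \<beta> \<delta> :: "nat \<Rightarrow> real" and \<alpha> :: "nat \<Rightarrow> nat \<Rightarrow> real"
    and Q :: "real \<times> real \<Rightarrow> real"
  assumes gamma_pos: "\<gamma> > 0"
    and H1: "\<And>z :: nat \<Rightarrow> real. (\<forall>i\<in>{1..3}. z i \<ge> 0) \<Longrightarrow> (\<exists>i\<in>{1..3}. z i \<noteq> 0) \<Longrightarrow>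
               (\<Sum>i=1..3. \<Sum>j=1..3. \<alpha> i j * z i * z j) > 0"
    and sym: "\<And>i j. i \<in> {1..3} \<Longrightarrow> j \<in> {1..3} \<Longrightarrow> \<alpha> i j = \<alpha> j i"
    and gradQ: "\<And>s. s \<in> interior Dom \<Longrightarrow>
               (Q has_derivative (\<lambda>h. qfield \<gamma> \<beta> \<delta> \<alpha> s \<bullet> h)) (at s)"
  shows "(\<exists>C. \<forall>s\<in>interior Dom. Ffun Q s \<ge> C)
       \<and> filterlim (\<lambda>R. Inf (Ffun Q ` {s \<in> interior Dom. norm s \<ge> R})) at_top at_top"
proof -
  have s12: "\<alpha> 1 2 = \<alpha> 2 1" and s13: "\<alpha> 1 3 = \<alpha> 3 1" and s23: "\<alpha> 2 3 = \<alpha> 3 2"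
    using sym by auto
  obtain K where K1: "K \<ge> 1" and Kb: "\<forall>x\<in>{0..1}. \<bar>Cp (\<lambda>k. \<beta> k - \<delta> k) x\<bar> \<le> K \<and> \<bar>Cp1 (\<lambda>k. \<beta> k - \<delta> k) x\<bar> \<le> K
      \<and> \<bar>Cp2 (\<lambda>k. \<beta> k - \<delta> k)\<bar> \<le> K \<and> \<bar>Ap \<alpha> x\<bar> \<le> K \<and> \<bar>Ap1 \<alpha> x\<bar> \<le> K \<and> \<bar>Ap2 \<alpha> x\<bar> \<le> K"
    using bounds_exist by blast
  obtain m where m: "m > 0" "\<forall>x\<in>{0..1}. Ap \<alpha> x \<ge> m" using amin_exist[OF H1] by blast
  define A where "A = \<gamma> * m / 4"
  have A0: "A > 0" unfolding A_def using gamma_pos m by simp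
  define \<rho>0 where "\<rho>0 = 2 * K / (\<gamma> * m)"
  have \<rho>00: "\<rho>0 \<ge> 0" unfolding \<rho>0_def using K1 gamma_pos m by simp
  define B where "B \<rho> = \<rho> * (A * \<rho> - K / 2)\<^sup>2 - (\<gamma> * K) * \<rho> - K" for \<rho>
  have lim: "filterlim B at_top at_top" unfolding B_def[abs_def] by (rule B_lim[OF A0])
  note FB = F_bounds[OF gamma_pos s12 s13 s23 gradQ _ K1 Kb m]
  have FB1: "\<And>s. s \<in> interior Dom \<Longrightarrow> Ffun Q s \<ge> - \<gamma> * (norm s)\<^sup>2 * K - K"
    using FB(1) by blast
  have FB2: "\<And>s. s \<in> interior Dom \<Longrightarrow> (norm s)\<^sup>2 \<ge> \<rho>0 \<Longrightarrow> Ffun Q s \<ge> B ((norm s)\<^sup>2)"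
    using FB(2) unfolding B_def A_def \<rho>0_def by (simp add: mult.assoc)
  have evB: "\<And>Z. \<exists>N. \<forall>\<rho>\<ge>N. Z \<le> B \<rho>"
    using lim unfolding filterlim_at_top eventually_at_top_linorder by blast
  have part1: "\<exists>C. \<forall>s\<in>interior Dom. Ffun Q s \<ge> C"
  proof -
    obtain N where N: "\<forall>\<rho>\<ge>N. 0 \<le> B \<rho>" using evB by blast
    define N' where "N' = max N \<rho>0"
    have N'0: "N' \<ge> 0" unfolding N'_def using \<rho>00 by simp
    show ?thesis
    proof (intro exI[of _ "- \<gamma> * N' * K - K"] ballI)
      fix s assume s: "s \<in> interior Dom"
      show "- \<gamma> * N' * K - K \<le> Ffun Q s"
      proof (cases "(norm s)\<^sup>2 \<ge> N'")
        case True
        hence "Ffun Q s \<ge> B ((norm s)\<^sup>2)" using FB2[OF s] unfolding N'_def by simp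
        moreover have "B ((norm s)\<^sup>2) \<ge> 0" using N True unfolding N'_def by simp
        moreover have "- \<gamma> * N' * K - K \<le> 0"
        proof -
          have "0 \<le> \<gamma> * N' * K" using gamma_pos N'0 K1 by simp
          thus ?thesis using K1 by linarith
        qed
        ultimately show ?thesis by linarith
      next
        case False
        hence "\<gamma> * (norm s)\<^sup>2 * K \<le> \<gamma> * N' * K" using gamma_pos K1
          by (intro mult_right_mono mult_left_mono) auto
        thus ?thesis using FB1[OF s] by linarith
      qed
    qed
  qed
  have part2: "filterlim (\<lambda>R. Inf (Ffun Q ` {s \<in> interior Dom. norm s \<ge> R})) at_top at_top"
    unfolding filterlim_at_top
  proof
    fix Z :: real
    obtain N where N: "\<forall>\<rho>\<ge>N. Z \<le> B \<rho>" using evB by blast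
    show "\<forall>\<^sub>F R in at_top. Z \<le> Inf (Ffun Q ` {s \<in> interior Dom. norm s \<ge> R})"
      using eventually_ge_at_top[of "max 1 (max N \<rho>0)"]
    proof eventually_elim
      case (elim R)
      have R1: "R \<ge> 1" "R \<ge> N" "R \<ge> \<rho>0" using elim by auto
      have ne: "Ffun Q ` {s \<in> interior Dom. norm s \<ge> R} \<noteq> {}"
      proof -
        have "(0, R) \<in> interior Dom" using R1 interior_Dom_iff by simp
        moreover have "norm (0::real, R) \<ge> R" using R1 by (simp add: norm_Pair)
        ultimately show ?thesis by blast
      qed
      show ?case
      proof (rule cInf_greatest[OF ne])
        fix v assume "v \<in> Ffun Q ` {s \<in> interior Dom. norm s \<ge> R}"
        then obtain s where s: "s \<in> interior Dom" "norm s \<ge> R" and v: "v = Ffun Q s" by blast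
        have "R \<le> R\<^sup>2" using R1 by (simp add: power2_eq_square)
        also have "R\<^sup>2 \<le> (norm s)\<^sup>2" using s R1 by (intro power_mono) auto
        finally have big: "R \<le> (norm s)\<^sup>2" .
        have "Ffun Q s \<ge> B ((norm s)\<^sup>2)" using FB2[OF s(1)] big R1 by simp
        moreover have "Z \<le> B ((norm s)\<^sup>2)" using N big R1 by simp
        ultimately show "Z \<le> v" using v by simp
      qed
    qed
  qed
  show ?thesis using part1 part2 by blast
qed


end
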